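(* Let $\mathbb{T}^2=[-\pi,\pi]^2$ and let $f_0,g_0$ be smooth $2\pi$-periodic functions of $y$. Then there exist constants $C_0,C_1,C_2>0$ and $\beta_1,\beta_2,\beta_3>0$ depending only on $f_0,g_0$, and a function $U(t,y)$, smooth in $y$, with $\|U\|_{L^\infty}\le 1$ and $\|U(t,\cdot)\|_{H^1_y}\le C_0e^{\beta_1\lceil t\rceil^2}$, such that the solution $\rho$ of \[ \partial_t\rho+U(t,y)\partial_x\rho=0,\qquad \rho(0,x,y)=f_0(y)\sin x+g_0(y)\cos x, \] satisfies $\|\rho(t,\cdot)\|_{H^{-1}}\le C_1e^{-\beta_2 t}$ and $\|\rho(t,\cdot)\|_{H^1}\le C_2e^{\beta_3\lceil t\rceil^2}$ for all $t\ge0$.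
   Context: $\lceil\cdot\rceil$ is the ceiling function. $\|f\|_{H^1}^2=\|f\|_{L^2}^2+\|\nabla f\|_{L^2}^2$ on $\mathbb{T}^2$; for mean-zero $f$, $\|f\|_{H^{-1}}^2=\sum_{\xi\in\mathbb{Z}^2\setminus\{0\}}|\xi|^{-2}|\hat f(\xi)|^2$. *)

theory Defs
  imports "HOL-Analysis.Analysis"
begin

definition smooth_fun :: "(real \<Rightarrow> real) \<Rightarrow> bool" where
  "smooth_fun f \<longleftrightarrow> (\<forall>n x. ((deriv ^^ n) f) differentiable (at x))"

definition periodic_2pi :: "(real \<Rightarrow> real) \<Rightarrow> bool" where
  "periodic_2pi f \<longleftrightarrow> (\<forall>y. f (y + 2 * pi) = f y)"

text \<open>The torus T^2 = [-pi,pi]^2, as a fundamental domain in R^2.\<close>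
definition torus_box :: "(real \<times> real) set" where
  "torus_box = {-pi..pi} \<times> {-pi..pi}"

definition H1_circle_sq :: "(real \<Rightarrow> real) \<Rightarrow> ennreal" where
  "H1_circle_sq u = (\<integral>\<^sup>+ y\<in>{-pi..pi}. ennreal ((u y)\<^sup>2 + (deriv u y)\<^sup>2) \<partial>lborel)"

definition H1_torus_sq :: "(real \<Rightarrow> real \<Rightarrow> real) \<Rightarrow> ennreal" where
  "H1_torus_sq f = (\<integral>\<^sup>+ p\<in>torus_box.
      ennreal ((f (fst p) (snd p))\<^sup>2
             + (deriv (\<lambda>x. f x (snd p)) (fst p))\<^sup>2
             + (deriv (\<lambda>y. f (fst p) y) (snd p))\<^sup>2) \<partial>lborel)"

definition fourier_coeff :: "(real \<Rightarrow> real \<Rightarrow> real) \<Rightarrow> int \<times> int \<Rightarrow> complex" where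
  "fourier_coeff f \<xi> = (1 / (4 * pi\<^sup>2)) *\<^sub>R
     set_lebesgue_integral lborel torus_box
       (\<lambda>p. complex_of_real (f (fst p) (snd p))
             * cis (- (of_int (fst \<xi>) * fst p + of_int (snd \<xi>) * snd p)))"

text \<open>Squared H^{-1} norm (for mean-zero f): sum over xi in Z^2 \ {0} of
  |xi|^{-2} |hat f(xi)|^2.\<close>
definition Hm1_torus_sq :: "(real \<Rightarrow> real \<Rightarrow> real) \<Rightarrow> ennreal" where
  "Hm1_torus_sq f = (\<integral>\<^sup>+ \<xi>. ennreal ((cmod (fourier_coeff f \<xi>))\<^sup>2
        / ((of_int (fst \<xi>))\<^sup>2 + (of_int (snd \<xi>))\<^sup>2)) \<partial>count_space (UNIV - {(0,0)}))"

text \<open>Solution of the shear transport equation rho_t + U(t,y) rho_x = 0,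
  rho(0) = rho0, given by characteristics:
  rho(t,x,y) = rho0(x - int_0^t U(s,y) ds, y).\<close>
definition transport_sol ::
  "(real \<Rightarrow> real \<Rightarrow> real) \<Rightarrow> (real \<Rightarrow> real \<Rightarrow> real) \<Rightarrow> real \<Rightarrow> real \<Rightarrow> real \<Rightarrow> real" where
  "transport_sol U rho0 t x y = rho0 (x - set_lebesgue_integral lborel {0..t} (\<lambda>s. U s y)) y"

end

theory Submission
  imports Defs
begin

fun SS :: "nat \<Rightarrow> nat" where
  "SS 0 = 1" | "SS (Suc k) = SS k * (1 + 2^k)"

definition NN :: "nat \<Rightarrow> nat" where "NN k = SS k * 2^k"

lemma SS_pos: "SS k \<ge> 1"
  by (induction k) auto

lemma SS_sum: "SS k = 1 + (\<Sum>n<k. NN n)"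
  by (induction k) (auto simp: NN_def algebra_simps)

lemma SS_le: "SS k \<le> 2^(k*k)"
proof (induction k)
  case 0 then show ?case by simp
next
  case (Suc k)
  have "SS (Suc k) = SS k * (1 + 2^k)" by simp
  also have "\<dots> \<le> 2^(k*k) * 2^(Suc k)"
    using Suc by (intro mult_mono) auto
  also have "\<dots> = 2^(k*k + Suc k)" by (simp add: power_add)
  also have "\<dots> \<le> 2^(Suc k * Suc k)" by (intro power_increasing) auto
  finally show ?case .
qed

lemma sumNN_le: "(\<Sum>n<k. real (NN (Suc n))) \<le> real (SS (Suc k))"
proof -
  have "(\<Sum>n<k. NN (Suc n)) \<le> (\<Sum>n<Suc k. NN n)"
    by (simp only: sum.lessThan_Suc_shift) simp?
  also have "\<dots> \<le> SS (Suc k)" using SS_sum[of "Suc k"] by linarith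
  finally show ?thesis by (metis of_nat_le_iff of_nat_sum)
qed

lemma SS_exp: "real (SS (Suc c)) \<le> exp 1 * exp (3 * real c ^ 2)"
proof -
  have "real (SS (Suc c)) \<le> real (2 ^ (Suc c * Suc c))"
    using SS_le[of "Suc c"] by (simp only: of_nat_le_iff)
  also have "\<dots> = (2::real) ^ (Suc c * Suc c)" by simp
  also have "\<dots> \<le> exp 1 ^ (Suc c * Suc c)"
    by (intro power_mono) (use exp_ge_add_one_self[of 1] in auto)
  also have "\<dots> = exp (real (Suc c * Suc c))" using exp_of_nat_mult[of "Suc c * Suc c" 1] by (metis mult_1_right)
  also have "\<dots> \<le> exp (1 + 3 * real c ^ 2)"
  proof -
    have "c \<le> c*c" by (cases c) auto
    then have "real c \<le> real c * real c" by (metis of_nat_le_iff of_nat_mult)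
    then have "real (Suc c * Suc c) \<le> 1 + 3 * real c ^ 2"
      by (simp add: power2_eq_square algebra_simps)
    then show ?thesis by simp
  qed
  also have "\<dots> = exp 1 * exp (3 * real c ^ 2)" by (simp only: exp_add)
  finally show ?thesis .
qed

lemma sin_plus_pi_half: "sin ((x::real) + pi/2) = cos x"
  by (simp add: sin_add)

lemma deriv_sin_iter: "(deriv ^^ n) (\<lambda>y. sin (a*y)) = (\<lambda>y. a^n * sin (a*y + real n * (pi/2)))"
proof (induction n)
  case 0 then show ?case by simp
next
  case (Suc n)
  have "(deriv ^^ Suc n) (\<lambda>y. sin (a*y)) = deriv (\<lambda>y. a^n * sin (a*y + real n * (pi/2)))"
    using Suc by simp
  also have "\<dots> = (\<lambda>y. a^Suc n * sin (a*y + real (Suc n) * (pi/2)))"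
  proof
    fix y
    have "((\<lambda>y. a^n * sin (a*y + real n * (pi/2))) has_real_derivative a^n * (cos (a*y + real n * (pi/2)) * a)) (at y)"
      by (auto intro!: derivative_eq_intros)
    moreover have "a^n * (cos (a*y + real n * (pi/2)) * a) = a^Suc n * sin (a*y + real (Suc n) * (pi/2))"
    proof -
      have e: "a*y + real (Suc n) * (pi/2) = (a*y + real n * (pi/2)) + pi/2" by (simp add: algebra_simps)
      have "sin (a*y + real (Suc n) * (pi/2)) = cos (a*y + real n * (pi/2))"
        unfolding e by (rule sin_plus_pi_half)
      then show ?thesis by (simp only: power_Suc) (simp add: algebra_simps)
    qed
    ultimately show "deriv (\<lambda>y. a^n * sin (a*y + real n * (pi/2))) y = a^Suc n * sin (a*y + real (Suc n) * (pi/2))"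
      by (metis DERIV_imp_deriv)
  qed
  finally show ?case .
qed

lemma DERIV_differentiable: "DERIV (f::real\<Rightarrow>real) x :> D \<Longrightarrow> f differentiable (at x)"
  using real_differentiable_def by blast

lemma smooth_sin: "smooth_fun (\<lambda>y. sin (a*y))"
  unfolding smooth_fun_def deriv_sin_iter
  by (auto intro!: DERIV_differentiable derivative_eq_intros)

lemma sin_shift_int: "sin ((x::real) + 2 * pi * of_int j) = sin x"
  unfolding sin_add using sin_int_2pin[of j] cos_int_2pin[of j] by simp
lemma cos_shift_int: "cos ((x::real) + 2 * pi * of_int j) = cos x"
  unfolding cos_add using sin_int_2pin[of j] cos_int_2pin[of j] by simp

lemma periodic_sin: "periodic_2pi (\<lambda>y. sin (real (n::nat) * y))"
proof -
  have "sin (real n * (y + 2*pi)) = sin (real n * y)" for y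
  proof -
    have "real n * (y + 2*pi) = real n * y + 2 * pi * of_int (int n)" by (simp add: algebra_simps)
    then show ?thesis using sin_shift_int[of "real n * y" "int n"] by simp
  qed
  then show ?thesis unfolding periodic_2pi_def by simp
qed

definition Uf :: "real \<Rightarrow> real \<Rightarrow> real" where
  "Uf t y = sin (real (NN (nat \<lceil>t\<rceil>)) * y)"

definition Phi :: "real \<Rightarrow> real \<Rightarrow> real" where
  "Phi t y = (\<Sum>n<nat \<lfloor>t\<rfloor>. sin (real (NN (Suc n)) * y))
      + (t - real (nat \<lfloor>t\<rfloor>)) * sin (real (NN (Suc (nat \<lfloor>t\<rfloor>))) * y)"

lemma Uf_meas: "(\<lambda>p. Uf (fst p) (snd p)) \<in> borel_measurable borel"
  unfolding Uf_def borel_prod[symmetric] by measurable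

lemma Uf_meas1: "(\<lambda>s. Uf s y) \<in> borel_measurable borel"
  unfolding Uf_def by measurable

lemma Uf_step:
  fixes m :: nat
  assumes "real m \<le> t" "t \<le> real m + 1"
  shows "((\<lambda>s. Uf s y) has_integral (t - real m) * sin (real (NN (Suc m)) * y)) {real m..t}"
proof -
  have "((\<lambda>s. sin (real (NN (Suc m)) * y)) has_integral (t - real m) * sin (real (NN (Suc m)) * y)) {real m..t}"
    using has_integral_const_real[of "sin (real (NN (Suc m)) * y)" "real m" t] assms by simp
  show ?thesis
  proof (rule has_integral_spike_finite[OF _ _ \<open>(_ has_integral _) _\<close>, of "{real m}"])
    fix s assume s: "s \<in> {real m..t} - {real m}"
    then have "real m < s" "s \<le> real m + 1" using assms by auto
    then have "\<lceil>s\<rceil> = int m + 1"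
      by (intro ceiling_unique) auto
    then have "nat \<lceil>s\<rceil> = Suc m" by simp
    then show "Uf s y = sin (real (NN (Suc m)) * y)" unfolding Uf_def by simp
  qed auto
qed

lemma Uf_full: "((\<lambda>s. Uf s y) has_integral (\<Sum>n<m. sin (real (NN (Suc n)) * y))) {0..real m}"
proof (induction m)
  case 0 then show ?case by (simp add: has_integral_refl)
next
  case (Suc m)
  have "((\<lambda>s. Uf s y) has_integral (\<Sum>n<m. sin (real (NN (Suc n)) * y)) + (real (Suc m) - real m) * sin (real (NN (Suc m)) * y)) {0..real (Suc m)}"
    by (rule has_integral_combine[OF _ _ Suc Uf_step]) auto
  then show ?case by simp
qed

lemma Phi_integral:
  assumes "t \<ge> 0"
  shows "((\<lambda>s. Uf s y) has_integral Phi t y) {0..t}"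
proof -
  define m where "m = nat \<lfloor>t\<rfloor>"
  have rm: "real m = of_int \<lfloor>t\<rfloor>" unfolding m_def using assms by simp
  have m1: "real m \<le> t" "t \<le> real m + 1" unfolding rm by linarith+
  have "((\<lambda>s. Uf s y) has_integral (\<Sum>n<m. sin (real (NN (Suc n)) * y)) + (t - real m) * sin (real (NN (Suc m)) * y)) {0..t}"
    by (rule has_integral_combine[OF _ _ Uf_full Uf_step]) (use m1 in auto)
  then show ?thesis unfolding Phi_def m_def .
qed

lemma Phi_lebesgue:
  assumes "t \<ge> 0"
  shows "set_lebesgue_integral lborel {0..t} (\<lambda>s. Uf s y) = Phi t y"
proof -
  have "set_integrable lborel {0..t} (\<lambda>s. Uf s y)"
    unfolding set_integrable_def
    by (rule integrableI_bounded_set_indicator[where B=1]) (auto simp: Uf_meas1 Uf_def emeasure_lborel_Icc_eq)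
  then have "set_lebesgue_integral lborel {0..t} (\<lambda>s. Uf s y) = integral {0..t} (\<lambda>s. Uf s y)"
    by (rule set_borel_integral_eq_integral(2))
  also have "\<dots> = Phi t y" using Phi_integral[OF assms] by (rule integral_unique)
  finally show ?thesis .
qed

lemma Uf_props: "smooth_fun (Uf t)" "periodic_2pi (Uf t)" "\<bar>Uf t y\<bar> \<le> 1"
proof -
  show "smooth_fun (Uf t)" unfolding Uf_def[abs_def] by (rule smooth_sin)
  show "periodic_2pi (Uf t)" unfolding Uf_def[abs_def] by (rule periodic_sin)
  show "\<bar>Uf t y\<bar> \<le> 1" unfolding Uf_def by simp
qed

lemma torus_box_sets: "torus_box \<in> sets lborel"
  unfolding torus_box_def by (simp add: closed_Times)

lemma torus_box_measure: "emeasure lborel torus_box = ennreal (4*pi^2)"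
proof -
  have "emeasure lborel torus_box = emeasure (lborel \<Otimes>\<^sub>M lborel) ({-pi..pi} \<times> {-pi..pi::real})"
    unfolding torus_box_def lborel_prod ..
  also have "\<dots> = emeasure lborel {-pi..pi::real} * emeasure lborel {-pi..pi::real}"
    by (rule lborel.emeasure_pair_measure_Times) auto
  also have "\<dots> = ennreal (4*pi^2)"
    by (simp add: ennreal_mult'[symmetric] power2_eq_square)
  finally show ?thesis .
qed

lemma nn_set_bound:
  assumes "A \<in> sets lborel" "\<And>x. x \<in> A \<Longrightarrow> f x \<le> K"
  shows "(\<integral>\<^sup>+x\<in>A. ennreal (f x) \<partial>lborel) \<le> ennreal K * emeasure lborel A"
proof -
  have "(\<integral>\<^sup>+x\<in>A. ennreal (f x) \<partial>lborel) \<le> (\<integral>\<^sup>+x. ennreal K * indicator A x \<partial>lborel)"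
    by (intro nn_integral_mono) (auto simp: assms(2) indicator_def ennreal_leI)
  also have "\<dots> = ennreal K * emeasure lborel A" using assms(1) by (rule nn_integral_cmult_indicator)
  finally show ?thesis .
qed

lemma cont_bound:
  assumes "continuous_on {a..b} (f::real\<Rightarrow>real)"
  obtains B where "B \<ge> 0" "\<And>x. x \<in> {a..b} \<Longrightarrow> \<bar>f x\<bar> \<le> B"
proof -
  have "compact (f ` {a..b})" by (rule compact_continuous_image[OF assms]) simp
  then have "bounded (f ` {a..b})" by (rule compact_imp_bounded)
  then obtain B where "B > 0" "\<And>x. x \<in> {a..b} \<Longrightarrow> norm (f x) \<le> B" unfolding bounded_pos by auto
  then show ?thesis using that[of B] by auto
qed

lemma smooth_facts:
  assumes "smooth_fun f"
  shows "\<And>x. DERIV f x :> deriv f x" "continuous_on S f" "continuous_on S (deriv f)"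
    "\<And>x. DERIV (deriv f) x :> deriv (deriv f) x"
proof -
  have d0: "f differentiable (at x)" for x
  proof -
    have "(deriv ^^ 0) f differentiable (at x)" using assms unfolding smooth_fun_def by blast
    then show ?thesis by simp
  qed
  have d1: "deriv f differentiable (at x)" for x
  proof -
    have "(deriv ^^ Suc 0) f differentiable (at x)" using assms unfolding smooth_fun_def by blast
    then show ?thesis by simp
  qed
  show "DERIV f x :> deriv f x" for x using d0 by (simp add: DERIV_deriv_iff_real_differentiable)
  show "DERIV (deriv f) x :> deriv (deriv f) x" for x using d1 by (simp add: DERIV_deriv_iff_real_differentiable)
  show "continuous_on S f"
    by (intro continuous_at_imp_continuous_on ballI differentiable_imp_continuous_within d0)
  show "continuous_on S (deriv f)"
    by (intro continuous_at_imp_continuous_on ballI differentiable_imp_continuous_within d1)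
qed

lemma H1_circle_Uf:
  assumes "t \<ge> 0"
  shows "H1_circle_sq (Uf t) \<le> ennreal ((sqrt (2*pi*(1 + exp 1^2)) * exp (3 * (of_int \<lceil>t\<rceil>)\<^sup>2))\<^sup>2)"
proof -
  define c where "c = nat \<lceil>t\<rceil>"
  have rc: "real c = of_int \<lceil>t\<rceil>" unfolding c_def using assms by simp
  define a where "a = real (NN c)"
  have Ua: "Uf t = (\<lambda>y. sin (a*y))" unfolding Uf_def a_def c_def by auto
  have dU: "deriv (Uf t) y = a * cos (a*y)" for y
    unfolding Ua by (rule DERIV_imp_deriv) (auto intro!: derivative_eq_intros)
  have a0: "a \<ge> 0" unfolding a_def by simp
  have "NN c \<le> SS (Suc c)" unfolding NN_def by simp
  then have "a \<le> exp 1 * exp (3 * real c ^ 2)" unfolding a_def using SS_exp[of c]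
    by (meson of_nat_le_iff order_trans)
  then have "a^2 \<le> (exp 1 * exp (3 * real c ^ 2))^2" using a0 by (intro power_mono) auto
  also have "\<dots> = exp 1^2 * exp (3 * real c ^ 2)^2" by (simp add: power_mult_distrib)
  finally have a2: "a^2 \<le> exp 1^2 * exp (3 * real c ^ 2)^2" .
  have e1: "1 \<le> exp (3 * real c ^ 2)^2" by simp
  have pt: "(Uf t y)\<^sup>2 + (deriv (Uf t) y)\<^sup>2 \<le> (1 + exp 1^2) * exp (3 * real c ^ 2)^2" for y
  proof -
    have "(Uf t y)\<^sup>2 + (deriv (Uf t) y)\<^sup>2 = (sin (a*y))^2 + a^2 * (cos (a*y))^2"
      unfolding dU unfolding Ua by (simp add: power_mult_distrib)
    also have "\<dots> \<le> 1 + a^2 * 1"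
      by (intro add_mono mult_left_mono) (auto simp: abs_square_le_1)
    also have "\<dots> \<le> (1 + exp 1^2) * exp (3 * real c ^ 2)^2"
      using a2 e1 distrib_right[of 1 "exp 1^2" "exp (3 * real c ^ 2)^2"] by linarith
    finally show ?thesis .
  qed
  have "H1_circle_sq (Uf t) \<le> ennreal ((1 + exp 1^2) * exp (3 * real c ^ 2)^2) * emeasure lborel {-pi..pi}"
    unfolding H1_circle_sq_def by (rule nn_set_bound) (use pt in auto)
  also have "\<dots> = ennreal ((1 + exp 1^2) * exp (3 * real c ^ 2)^2 * (2*pi))"
    by (simp add: ennreal_mult'[symmetric])
  also have "(1 + exp 1^2) * exp (3 * real c ^ 2)^2 * (2*pi) = (sqrt (2*pi*(1 + exp 1^2)) * exp (3 * (of_int \<lceil>t\<rceil>)\<^sup>2))\<^sup>2"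
    unfolding rc[symmetric] by (simp add: power_mult_distrib)
  finally show ?thesis .
qed

definition Phi' :: "real \<Rightarrow> real \<Rightarrow> real" where
  "Phi' t y = (\<Sum>n<nat \<lfloor>t\<rfloor>. real (NN (Suc n)) * cos (real (NN (Suc n)) * y))
      + (t - real (nat \<lfloor>t\<rfloor>)) * (real (NN (Suc (nat \<lfloor>t\<rfloor>))) * cos (real (NN (Suc (nat \<lfloor>t\<rfloor>))) * y))"

lemma Phi_deriv: "DERIV (Phi t) y :> Phi' t y"
  unfolding Phi_def[abs_def] Phi'_def
  by (auto intro!: derivative_eq_intros DERIV_sum simp: mult.commute)

lemma SS_mono: "m \<le> n \<Longrightarrow> SS m \<le> SS n"
  by (rule lift_Suc_mono_le[of SS]) auto

lemma Phi'_bound: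
  assumes "t \<ge> 0"
  shows "\<bar>Phi' t y\<bar> \<le> exp 7 * exp (6 * (of_int \<lceil>t\<rceil>)^2)"
proof -
  define m where "m = nat \<lfloor>t\<rfloor>"
  define c where "c = nat \<lceil>t\<rceil>"
  have rc: "real c = of_int \<lceil>t\<rceil>" unfolding c_def using assms by simp
  have mc: "m \<le> c" unfolding m_def c_def by (simp add: nat_mono)
  have th: "0 \<le> t - real m" "t - real m \<le> 1" unfolding m_def using assms by (simp_all add: of_nat_nat) linarith+
  have "\<bar>Phi' t y\<bar> \<le> (\<Sum>n<m. real (NN (Suc n))) + real (NN (Suc m))"
  proof -
    have "\<bar>Phi' t y\<bar> \<le> (\<Sum>n<m. \<bar>real (NN (Suc n)) * cos (real (NN (Suc n)) * y)\<bar>)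
          + \<bar>(t - real m) * (real (NN (Suc m)) * cos (real (NN (Suc m)) * y))\<bar>"
      unfolding Phi'_def m_def[symmetric] by (rule order_trans[OF abs_triangle_ineq add_right_mono[OF sum_abs]])
    also have "\<dots> \<le> (\<Sum>n<m. real (NN (Suc n))) + real (NN (Suc m))"
    proof (intro add_mono sum_mono)
      fix n show "\<bar>real (NN (Suc n)) * cos (real (NN (Suc n)) * y)\<bar> \<le> real (NN (Suc n))"
        by (simp add: abs_mult mult_left_le)
    next
      have "\<bar>(t - real m) * (real (NN (Suc m)) * cos (real (NN (Suc m)) * y))\<bar>
          = \<bar>t - real m\<bar> * (real (NN (Suc m)) * \<bar>cos (real (NN (Suc m)) * y)\<bar>)" by (simp add: abs_mult)
      also have "\<dots> \<le> 1 * (real (NN (Suc m)) * 1)"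
        using th by (intro mult_mono) auto
      finally show "\<bar>(t - real m) * (real (NN (Suc m)) * cos (real (NN (Suc m)) * y))\<bar> \<le> real (NN (Suc m))" by simp
    qed
    finally show ?thesis .
  qed
  also have "\<dots> = (\<Sum>n<Suc m. real (NN (Suc n)))" by simp
  also have "\<dots> \<le> real (SS (Suc (Suc m)))" by (rule sumNN_le)
  also have "\<dots> \<le> real (SS (Suc (Suc c)))"
  proof -
    have "SS (Suc (Suc m)) \<le> SS (Suc (Suc c))" using mc by (intro SS_mono) simp
    then show ?thesis by (simp only: of_nat_le_iff)
  qed
  also have "\<dots> \<le> exp 1 * exp (3 * real (Suc c) ^ 2)" by (rule SS_exp)
  also have "\<dots> \<le> exp 1 * exp (6 + 6 * real c ^ 2)"
  proof -
    have h: "0 \<le> (real c - 1)^2" by simp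
    have e: "real (Suc c)^2 = real c^2 + 2*real c + 1" by (simp add: power2_eq_square algebra_simps)
    have h2: "(real c - 1)^2 = real c^2 - 2*real c + 1" by (simp add: power2_eq_square algebra_simps)
    have "3 * real (Suc c) ^ 2 \<le> 6 + 6 * real c ^ 2" using h e h2 by linarith
    then show ?thesis by simp
  qed
  also have "\<dots> = exp (1 + (6 + 6 * real c ^ 2))" by (rule exp_add[symmetric])
  also have "\<dots> = exp (7 + 6 * real c ^ 2)" by simp
  also have "\<dots> = exp 7 * exp (6 * (of_int \<lceil>t\<rceil>)^2)" unfolding rc[symmetric] by (rule exp_add)
  finally show ?thesis .
qed

definition rho :: "(real \<Rightarrow> real) \<Rightarrow> (real \<Rightarrow> real) \<Rightarrow> real \<Rightarrow> real \<Rightarrow> real \<Rightarrow> real" where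
  "rho f g t x y = f y * sin (x - Phi t y) + g y * cos (x - Phi t y)"

lemma transport_rho:
  assumes "t \<ge> 0"
  shows "transport_sol Uf (\<lambda>x y. f y * sin x + g y * cos x) t = rho f g t"
  unfolding transport_sol_def rho_def[abs_def] Phi_lebesgue[OF assms] by simp

lemma rho_dx: "deriv (\<lambda>x. rho f g t x y) x = f y * cos (x - Phi t y) - g y * sin (x - Phi t y)"
  unfolding rho_def by (rule DERIV_imp_deriv) (auto intro!: derivative_eq_intros)

lemma rho_DERIV_y:
  assumes "smooth_fun f" "smooth_fun g"
  shows "DERIV (\<lambda>y. rho f g t x y) y :> deriv f y * sin (x - Phi t y) - f y * cos (x - Phi t y) * Phi' t y
           + deriv g y * cos (x - Phi t y) + g y * sin (x - Phi t y) * Phi' t y"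
  unfolding rho_def
  by (auto intro!: derivative_eq_intros smooth_facts(1)[OF assms(1)] smooth_facts(1)[OF assms(2)] Phi_deriv
           simp: algebra_simps)

lemma rho_dy:
  assumes "smooth_fun f" "smooth_fun g"
  shows "deriv (\<lambda>y. rho f g t x y) y = deriv f y * sin (x - Phi t y) - f y * cos (x - Phi t y) * Phi' t y
           + deriv g y * cos (x - Phi t y) + g y * sin (x - Phi t y) * Phi' t y"
  by (rule DERIV_imp_deriv[OF rho_DERIV_y[OF assms]])

lemma rho_diff:
  assumes "smooth_fun f" "smooth_fun g"
  shows "(\<lambda>y. rho f g t x y) differentiable (at y)"
  using rho_DERIV_y[OF assms] DERIV_differentiable by blast

lemma sq_le: "\<bar>x::real\<bar> \<le> B \<Longrightarrow> x^2 \<le> B^2"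
  by (metis abs_ge_zero power2_abs power_mono)

lemma abs_lin: "\<bar>p\<bar> \<le> 1 \<Longrightarrow> \<bar>q\<bar> \<le> 1 \<Longrightarrow> \<bar>a * p + b * q\<bar> \<le> \<bar>a\<bar> + \<bar>b::real\<bar>"
proof -
  assume "\<bar>p\<bar> \<le> 1" "\<bar>q\<bar> \<le> 1"
  then have "\<bar>a * p\<bar> \<le> \<bar>a\<bar>" "\<bar>b * q\<bar> \<le> \<bar>b\<bar>" by (simp_all add: abs_mult mult_left_le)
  then show ?thesis by (smt (verit))
qed

lemma abs_lin_m: "\<bar>p\<bar> \<le> 1 \<Longrightarrow> \<bar>q\<bar> \<le> 1 \<Longrightarrow> \<bar>a * p - b * q\<bar> \<le> \<bar>a\<bar> + \<bar>b::real\<bar>"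
  using abs_lin[of p q a "-b"] by simp

lemma abs_sc: "\<bar>a * sin u + b * cos v\<bar> \<le> \<bar>a\<bar> + \<bar>b::real\<bar>"
proof -
  have "\<bar>a * sin u\<bar> \<le> \<bar>a\<bar>" by (simp add: abs_mult mult_left_le)
  moreover have "\<bar>b * cos v\<bar> \<le> \<bar>b\<bar>" by (simp add: abs_mult mult_left_le)
  ultimately show ?thesis by (smt (verit))
qed

lemma H1_torus_rho:
  assumes "smooth_fun f" "smooth_fun g" "t \<ge> 0"
    and M: "\<And>y. y \<in> {-pi..pi} \<Longrightarrow> \<bar>f y\<bar> \<le> M \<and> \<bar>g y\<bar> \<le> M \<and> \<bar>deriv f y\<bar> \<le> M \<and> \<bar>deriv g y\<bar> \<le> M"
  shows "H1_torus_sq (rho f g t) \<le> ennreal ((sqrt (48*pi^2*M^2*(1 + exp 7)^2 + 1) * exp (6 * (of_int \<lceil>t\<rceil>)\<^sup>2))\<^sup>2)"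
proof -
  define E :: real where "E = exp (6 * (of_int \<lceil>t\<rceil>)\<^sup>2)"
  have E1: "1 \<le> E" unfolding E_def by simp
  have P: "\<bar>Phi' t y\<bar> \<le> exp 7 * E" for y unfolding E_def by (rule Phi'_bound[OF assms(3)])
  have M0: "M \<ge> 0" using M[of 0] by auto
  have pt: "(rho f g t x y)\<^sup>2 + (deriv (\<lambda>x. rho f g t x y) x)\<^sup>2 + (deriv (\<lambda>y. rho f g t x y) y)\<^sup>2
      \<le> 12 * M^2 * ((1 + exp 7) * E)^2" if "y \<in> {-pi..pi}" for x y
  proof -
    note My = M[OF that]
    have a1: "\<bar>rho f g t x y\<bar> \<le> 2*M" unfolding rho_def using abs_lin[of "sin (x - Phi t y)" "cos (x - Phi t y)" "f y" "g y"] My by simp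
    have a2: "\<bar>deriv (\<lambda>x. rho f g t x y) x\<bar> \<le> 2*M" unfolding rho_dx
      using abs_lin_m[of "cos (x - Phi t y)" "sin (x - Phi t y)" "f y" "g y"] My by simp
    have "deriv (\<lambda>y. rho f g t x y) y = (deriv f y * sin (x - Phi t y) + deriv g y * cos (x - Phi t y))
         + Phi' t y * (g y * sin (x - Phi t y) + (- f y) * cos (x - Phi t y))"
      unfolding rho_dy[OF assms(1,2)] by (simp add: algebra_simps)
    also have "\<bar>\<dots>\<bar> \<le> 2*M + (exp 7 * E) * (2*M)"
    proof -
      have "\<bar>Phi' t y * (g y * sin (x - Phi t y) + (- f y) * cos (x - Phi t y))\<bar> \<le> (exp 7 * E) * (2*M)"
        unfolding abs_mult using abs_lin[of "sin (x - Phi t y)" "cos (x - Phi t y)" "g y" "- f y"] My P[of y]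
        by (intro mult_mono) auto
      then show ?thesis using abs_lin[of "sin (x - Phi t y)" "cos (x - Phi t y)" "deriv f y" "deriv g y"] My by (smt (verit) abs_sin_le_one abs_cos_le_one)
    qed
    finally have a3: "\<bar>deriv (\<lambda>y. rho f g t x y) y\<bar> \<le> 2*M*(1 + exp 7 * E)" by (simp add: algebra_simps)
    have b: "1 + exp 7 * E \<le> (1 + exp 7) * E" using E1 by (simp add: algebra_simps)
    define X where "X = (1 + exp 7) * E"
    have r1: "(rho f g t x y)\<^sup>2 \<le> (2*M)^2" using a1 by (rule sq_le)
    have r2: "(deriv (\<lambda>x. rho f g t x y) x)\<^sup>2 \<le> (2*M)^2" using a2 by (rule sq_le)
    have r3: "(deriv (\<lambda>y. rho f g t x y) y)\<^sup>2 \<le> (2*M*X)^2"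
    proof -
      have "2*M*(1 + exp 7 * E) \<le> 2*M*X" unfolding X_def using b M0 by (intro mult_left_mono) auto
      then have "\<bar>deriv (\<lambda>y. rho f g t x y) y\<bar> \<le> 2*M*X" using a3 by linarith
      then show ?thesis by (rule sq_le)
    qed
    have r4: "(2*M)^2 \<le> (2*M*X)^2"
    proof -
      have "1*1 \<le> (1 + exp 7) * E" using E1 by (intro mult_mono) auto
      then have "1 \<le> X" unfolding X_def by simp
      then have "2*M*1 \<le> 2*M*X" using M0 by (intro mult_left_mono) auto
      then show ?thesis using M0 by (intro power_mono) auto
    qed
    have r5: "(2*M*X)^2 = 4 * (M^2 * X^2)" by (simp add: power_mult_distrib)
    have "(rho f g t x y)\<^sup>2 + (deriv (\<lambda>x. rho f g t x y) x)\<^sup>2 + (deriv (\<lambda>y. rho f g t x y) y)\<^sup>2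
        \<le> 12 * (M^2 * X^2)" using r1 r2 r3 r4 r5 by linarith
    then show ?thesis unfolding X_def by simp
  qed
  have "H1_torus_sq (rho f g t) \<le> ennreal (12 * M^2 * ((1 + exp 7) * E)^2) * emeasure lborel torus_box"
    unfolding H1_torus_sq_def by (rule nn_set_bound[OF torus_box_sets]) (use pt in \<open>auto simp: torus_box_def\<close>)
  also have "\<dots> = ennreal (12 * M^2 * ((1 + exp 7) * E)^2 * (4*pi^2))"
    by (simp add: torus_box_measure ennreal_mult'[symmetric])
  also have "\<dots> \<le> ennreal ((sqrt (48*pi^2*M^2*(1 + exp 7)^2 + 1) * E)\<^sup>2)"
  proof (intro ennreal_leI)
    define K where "K = 48*pi^2*M^2*(1 + exp 7)^2"
    have K0: "K \<ge> 0" unfolding K_def by simp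
    have a: "(sqrt (K + 1) * E)\<^sup>2 = K * E^2 + E^2" using K0 by (simp add: power_mult_distrib algebra_simps)
    have b: "12 * M^2 * ((1 + exp 7) * E)^2 * (4*pi^2) = K * E^2"
      unfolding K_def by (simp only: power_mult_distrib) (simp add: algebra_simps)
    have "12 * M^2 * ((1 + exp 7) * E)^2 * (4*pi^2) \<le> (sqrt (K + 1) * E)\<^sup>2"
      unfolding a b by simp
    then show "12 * M^2 * ((1 + exp 7) * E)^2 * (4*pi^2) \<le> (sqrt (48*pi^2*M^2*(1 + exp 7)^2 + 1) * E)\<^sup>2"
      unfolding K_def .
  qed
  finally show ?thesis unfolding E_def .
qed

lemma cis_vd: "((\<lambda>x. cis (a * x)) has_vector_derivative (\<i> * complex_of_real a * cis (a*x))) (at x within S)"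
proof -
  have "((\<lambda>x. cis (a * x)) has_derivative (\<lambda>t. (a*t) *\<^sub>R (\<i> * cis (a*x)))) (at x within S)"
    by (intro has_derivative_cis derivative_intros)
  then show ?thesis unfolding has_vector_derivative_def
    by (rule has_derivative_eq_rhs) (auto simp: fun_eq_iff scaleR_conv_of_real algebra_simps)
qed

lemma cis_2pi_int: "cis (2 * pi * of_int j) = 1"
  by (simp add: cis.ctr complex_eq_iff)

lemma cis_int_pi: "cis (of_int j * pi) = cis (- (of_int j * pi))"
proof -
  have "cis (of_int j * pi) = cis (- (of_int j * pi)) * cis (2 * pi * of_int j)"
    by (simp add: cis_mult algebra_simps)
  then show ?thesis by (simp add: cis_2pi_int)
qed

lemma cis_int_has_integral:
  fixes j :: int
  shows "((\<lambda>x. cis (of_int j * x)) has_integral (if j = 0 then complex_of_real (2*pi) else 0)) {-pi..pi}"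
proof (cases "j = 0")
  case True
  then show ?thesis using has_integral_const_real[of "1::complex" "-pi" pi] by (simp add: scaleR_conv_of_real)
next
  case False
  define F where "F x = cis (of_int j * x) / (\<i> * complex_of_real (of_int j))" for x
  have "((\<lambda>x. cis (of_int j * x)) has_integral (F pi - F (-pi))) {-pi..pi}"
  proof (rule fundamental_theorem_of_calculus)
    fix x :: real
    have "(F has_vector_derivative (\<i> * complex_of_real (of_int j) * cis (of_int j * x)) / (\<i> * complex_of_real (of_int j))) (at x within {-pi..pi})"
      unfolding F_def by (intro has_vector_derivative_divide cis_vd)
    then show "(F has_vector_derivative cis (of_int j * x)) (at x within {-pi..pi})"
      using False by simp
  qed simp
  moreover have "F pi - F (-pi) = 0" unfolding F_def using cis_int_pi[of j] by simp
  ultimately show ?thesis using False by simp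
qed

lemma cis_int_integral: "integral {-pi..pi} (\<lambda>x. cis (of_int j * x)) = (if j = 0 then complex_of_real (2*pi) else 0)"
  using cis_int_has_integral by (rule integral_unique)

lemma prod_integral:
  fixes u v :: "real \<Rightarrow> complex"
  assumes "continuous_on {a..b} u" "continuous_on {c..d} v"
  shows "integral (cbox (a,c) (b,d)) (\<lambda>p. u (fst p) * v (snd p)) = integral {a..b} u * integral {c..d} v"
proof -
  have cont: "continuous_on (cbox (a,c) (b,d)) (\<lambda>p. u (fst p) * v (snd p))"
    unfolding cbox_Pair_eq
    by (intro continuous_intros continuous_on_compose2[OF assms(1) continuous_on_fst]
        continuous_on_compose2[OF assms(2) continuous_on_snd]) auto
  have "integral (cbox (a,c) (b,d)) (\<lambda>p. u (fst p) * v (snd p)) = integral (cbox a b) (\<lambda>x. integral (cbox c d) (\<lambda>y. u x * v y))"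
    using integral_prod_continuous[OF cont] by simp
  also have "\<dots> = integral (cbox a b) (\<lambda>x. u x * integral (cbox c d) v)"
    by (simp add: integral_mult_right)
  also have "\<dots> = integral {a..b} u * integral {c..d} v"
    by (simp add: integral_mult_left)
  finally show ?thesis .
qed

definition H1 :: "(real \<Rightarrow> real) \<Rightarrow> (real \<Rightarrow> real) \<Rightarrow> real \<Rightarrow> real \<Rightarrow> complex" where
  "H1 f g t y = Complex (g y) (- f y) * cis (- Phi t y)"
definition H2 :: "(real \<Rightarrow> real) \<Rightarrow> (real \<Rightarrow> real) \<Rightarrow> real \<Rightarrow> real \<Rightarrow> complex" where
  "H2 f g t y = Complex (g y) (f y) * cis (Phi t y)"
definition Ahat :: "(real \<Rightarrow> complex) \<Rightarrow> int \<Rightarrow> complex" where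
  "Ahat H l = integral {-pi..pi} (\<lambda>y. H y * cis (- (of_int l * y)))"

lemma rho_complex:
  "complex_of_real (rho f g t x y) = (H1 f g t y * cis x + H2 f g t y * cis (-x)) / 2"
proof -
  define w where "w = x - Phi t y"
  have c1: "cis (- Phi t y) * cis x = cis w" unfolding w_def by (simp add: cis_mult)
  have c2: "cis (Phi t y) * cis (-x) = cis (-w)" unfolding w_def by (simp add: cis_mult)
  have "H1 f g t y * cis x + H2 f g t y * cis (-x) = Complex (g y) (- f y) * cis w + Complex (g y) (f y) * cis (-w)"
    unfolding H1_def H2_def by (simp add: mult.assoc c1 c2)
  also have "\<dots> = complex_of_real (2 * (f y * sin w + g y * cos w))"
    by (simp add: complex_eq_iff algebra_simps)
  finally show ?thesis unfolding rho_def w_def[symmetric] by simp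
qed

lemma cont_Phi: "continuous_on S (Phi t)"
  unfolding Phi_def[abs_def] by (intro continuous_intros)

lemma cont_H1:
  assumes "continuous_on UNIV f" "continuous_on UNIV g"
  shows "continuous_on S (H1 f g t)"
proof -
  have "continuous_on S f" "continuous_on S g" using assms continuous_on_subset by blast+
  then show ?thesis unfolding H1_def[abs_def] Complex_eq
    by (intro continuous_intros cont_Phi)
qed

lemma cont_H2:
  assumes "continuous_on UNIV f" "continuous_on UNIV g"
  shows "continuous_on S (H2 f g t)"
proof -
  have "continuous_on S f" "continuous_on S g" using assms continuous_on_subset by blast+
  then show ?thesis unfolding H2_def[abs_def] Complex_eq
    by (intro continuous_intros cont_Phi)
qed

lemma fc_rho:
  assumes cf: "continuous_on UNIV f" and cg: "continuous_on UNIV g"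
  shows "fourier_coeff (rho f g t) (k, l) =
     (if k = 1 then Ahat (H1 f g t) l / complex_of_real (4*pi) else 0)
   + (if k = -1 then Ahat (H2 f g t) l / complex_of_real (4*pi) else 0)"
proof -
  define V1 where "V1 y = H1 f g t y * cis (- (of_int l * y)) / 2" for y
  define V2 where "V2 y = H2 f g t y * cis (- (of_int l * y)) / 2" for y
  define F where "F p = complex_of_real (rho f g t (fst p) (snd p)) * cis (- (of_int k * fst p + of_int l * snd p))" for p
  have Feq: "F p = cis (of_int (1 - k) * fst p) * V1 (snd p) + cis (of_int (-1 - k) * fst p) * V2 (snd p)" for p
  proof -
    obtain x y where p: "p = (x, y)" by (cases p)
    have e1: "cis x * cis (- (of_int k * x + of_int l * y)) = cis (of_int (1 - k) * x) * cis (- (of_int l * y))"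
      by (simp add: cis_mult algebra_simps)
    have e2: "cis (-x) * cis (- (of_int k * x + of_int l * y)) = cis (of_int (-1 - k) * x) * cis (- (of_int l * y))"
      by (simp add: cis_mult algebra_simps)
    have "F p = (H1 f g t y * (cis x * cis (- (of_int k * x + of_int l * y)))
              + H2 f g t y * (cis (-x) * cis (- (of_int k * x + of_int l * y)))) / 2"
      unfolding F_def p rho_complex by (simp add: algebra_simps)
    also have "\<dots> = cis (of_int (1 - k) * x) * V1 y + cis (of_int (-1 - k) * x) * V2 y"
      unfolding e1 e2 V1_def V2_def by (simp add: algebra_simps)
    finally show ?thesis unfolding p by simp
  qed
  have cV1: "continuous_on {-pi..pi} V1" unfolding V1_def[abs_def]
    by (intro continuous_intros cont_H1 cf cg) auto
  have cV2: "continuous_on {-pi..pi} V2" unfolding V2_def[abs_def]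
    by (intro continuous_intros cont_H2 cf cg) auto
  have cc: "continuous_on {-pi..pi} (\<lambda>x. cis (of_int j * x))" for j
    by (intro continuous_intros)
  have box: "torus_box = cbox (-pi, -pi) (pi, pi)" unfolding torus_box_def cbox_Pair_eq by simp
  have contF: "continuous_on torus_box F"
    unfolding Feq[abs_def] box cbox_Pair_eq
    by (intro continuous_intros continuous_on_compose2[OF cV1 continuous_on_snd]
        continuous_on_compose2[OF cV2 continuous_on_snd]) auto
  have "set_integrable lborel torus_box F"
    unfolding set_integrable_def
    by (rule borel_integrable_compact[OF _ contF]) (simp add: box compact_cbox)
  then have "set_lebesgue_integral lborel torus_box F = integral torus_box F"
    by (rule set_borel_integral_eq_integral(2))
  also have "\<dots> = integral (cbox (-pi, -pi) (pi, pi)) (\<lambda>p. cis (of_int (1 - k) * fst p) * V1 (snd p))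
                + integral (cbox (-pi, -pi) (pi, pi)) (\<lambda>p. cis (of_int (-1 - k) * fst p) * V2 (snd p))"
    unfolding Feq[abs_def] box
  proof (rule integral_add)
    show "(\<lambda>p. cis (of_int (1 - k) * fst p) * V1 (snd p)) integrable_on cbox (- pi, - pi) (pi, pi)"
      by (intro integrable_continuous continuous_intros continuous_on_compose2[OF cV1 continuous_on_snd])
         (auto simp: cbox_Pair_eq)
    show "(\<lambda>p. cis (of_int (-1 - k) * fst p) * V2 (snd p)) integrable_on cbox (- pi, - pi) (pi, pi)"
      by (intro integrable_continuous continuous_intros continuous_on_compose2[OF cV2 continuous_on_snd])
         (auto simp: cbox_Pair_eq)
  qed
  also have "\<dots> = integral {-pi..pi} (\<lambda>x. cis (of_int (1 - k) * x)) * integral {-pi..pi} V1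
                + integral {-pi..pi} (\<lambda>x. cis (of_int (-1 - k) * x)) * integral {-pi..pi} V2"
    by (simp only: prod_integral[OF cc cV1] prod_integral[OF cc cV2])
  also have "\<dots> = (if k = 1 then complex_of_real (2*pi) * integral {-pi..pi} V1 else 0)
                + (if k = -1 then complex_of_real (2*pi) * integral {-pi..pi} V2 else 0)"
    unfolding cis_int_integral by auto
  finally have L: "set_lebesgue_integral lborel torus_box F = \<dots>" .
  have iV1: "integral {-pi..pi} V1 = Ahat (H1 f g t) l / 2"
    unfolding V1_def[abs_def] Ahat_def by (simp add: integral_divide)
  have iV2: "integral {-pi..pi} V2 = Ahat (H2 f g t) l / 2"
    unfolding V2_def[abs_def] Ahat_def by (simp add: integral_divide)
  have "fourier_coeff (rho f g t) (k, l) = (1 / (4 * pi\<^sup>2)) *\<^sub>R set_lebesgue_integral lborel torus_box F"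
    unfolding fourier_coeff_def F_def by simp
  also have "\<dots> = (if k = 1 then Ahat (H1 f g t) l / complex_of_real (4*pi) else 0)
   + (if k = -1 then Ahat (H2 f g t) l / complex_of_real (4*pi) else 0)"
    unfolding L iV1 iV2 by (auto simp: scaleR_conv_of_real power2_eq_square field_simps)
  finally show ?thesis .
qed

lemma count_le:
  fixes g :: "int \<times> int \<Rightarrow> real"
  assumes g0: "\<And>x. g x \<ge> 0" and S: "\<And>F. finite F \<Longrightarrow> F \<subseteq> A \<Longrightarrow> (\<Sum>x\<in>F. g x) \<le> c"
  shows "(\<integral>\<^sup>+x. ennreal (g x) \<partial>count_space A) \<le> ennreal c"
proof -
  define h where "h = from_nat_into (UNIV :: (int\<times>int) set)"
  have inf: "infinite (UNIV :: (int\<times>int) set)" by (simp add: infinite_UNIV_int finite_prod)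
  have bij: "bij_betw h UNIV UNIV" unfolding h_def by (rule bij_betw_from_nat_into) (use inf in auto)
  define G where "G x = ennreal (g x) * indicator A x" for x
  have "(\<integral>\<^sup>+x. ennreal (g x) \<partial>count_space A) = (\<integral>\<^sup>+x. G x \<partial>count_space UNIV)"
    unfolding G_def by (cases "A = UNIV") (simp_all add: nn_integral_count_space_indicator)
  also have "\<dots> = (\<integral>\<^sup>+n. G (h n) \<partial>count_space UNIV)" using nn_integral_bij_count_space[OF bij, of G] by simp
  also have "\<dots> = (\<Sum>n. G (h n))" by (rule nn_integral_count_space_nat)
  also have "\<dots> \<le> ennreal c"
  proof (rule suminf_le_const)
    show "summable (\<lambda>n. G (h n))" by simp
    fix N
    have inj: "inj_on h {..<N}" using bij unfolding bij_betw_def by (auto intro: inj_on_subset)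
    have "(\<Sum>n<N. G (h n)) = (\<Sum>x\<in>h ` {..<N}. G x)" by (simp add: sum.reindex[OF inj])
    also have "\<dots> = (\<Sum>x\<in>h ` {..<N} \<inter> A. ennreal (g x))"
      unfolding G_def by (simp add: sum.inter_restrict[symmetric] indicator_def of_bool_def if_distrib cong: if_cong)
    also have "\<dots> = ennreal (\<Sum>x\<in>h ` {..<N} \<inter> A. g x)" using g0 by simp
    also have "\<dots> \<le> ennreal c" by (intro ennreal_leI S) auto
    finally show "(\<Sum>n<N. G (h n)) \<le> ennreal c" .
  qed
  finally show ?thesis .
qed

lemma inv_sq_sym: "(\<Sum>l\<in>{-int n..int n}. 1 / (1 + (of_int l)^2)) \<le> (5::real) - 4 / (real n + 1)"
proof (induction n)
  case 0 then show ?case by simp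
next
  case (Suc n)
  have set: "{-int (Suc n)..int (Suc n)} = insert (int n + 1) (insert (-(int n + 1)) {-int n..int n})" by auto
  have "(\<Sum>l\<in>{-int (Suc n)..int (Suc n)}. 1 / (1 + (of_int l)^2)) =
        2 / (1 + (real n + 1)^2) + (\<Sum>l\<in>{-int n..int n}. 1 / (1 + (of_int l :: real)^2))"
    unfolding set by (simp add: power2_eq_square algebra_simps)
  also have "\<dots> \<le> 2 / (1 + (real n + 1)^2) + (5 - 4 / (real n + 1))" using Suc by simp
  also have "\<dots> \<le> 5 - 4 / (real (Suc n) + 1)"
  proof -
    define x where "x = real n"
    have x0: "x \<ge> 0" unfolding x_def by simp
    have "2 / (1 + (x + 1)^2) \<le> 4 / (x + 1) - 4 / (x + 2)"
    proof -
      have "4 / (x + 1) - 4 / (x + 2) = 4 / ((x+1)*(x+2))" using x0 by (simp add: field_simps)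
      moreover have "2 / (1 + (x + 1)^2) \<le> 4 / ((x+1)*(x+2))"
      proof -
        have d1: "0 < (x+1)*(x+2)" "0 < 1 + (x+1)^2" using x0 by (auto simp: add_pos_nonneg)
        have "2 * ((x+1)*(x+2)) \<le> 4 * (1 + (x + 1)^2)" using x0 by (simp add: power2_eq_square algebra_simps)
        then show ?thesis using d1 by (simp add: field_simps)
      qed
      ultimately show ?thesis by simp
    qed
    then show ?thesis unfolding x_def by (simp add: algebra_simps)
  qed
  finally show ?case .
qed

lemma inv_sq_sum:
  assumes "finite L"
  shows "(\<Sum>l\<in>L. 1 / (1 + (of_int l)^2)) \<le> (5::real)"
proof -
  define n where "n = (\<Sum>l\<in>L. nat \<bar>l\<bar>)"
  have sub: "L \<subseteq> {-int n..int n}"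
  proof
    fix l assume "l \<in> L"
    then have "nat \<bar>l\<bar> \<le> n" unfolding n_def by (intro member_le_sum) (use assms in auto)
    then show "l \<in> {-int n..int n}" by auto
  qed
  have "(\<Sum>l\<in>L. 1 / (1 + (of_int l)^2)) \<le> (\<Sum>l\<in>{-int n..int n}. 1 / (1 + (of_int l :: real)^2))"
    by (rule sum_mono2[OF _ sub]) (auto simp: add_pos_nonneg)
  also have "\<dots> \<le> 5 - 4 / (real n + 1)" by (rule inv_sq_sym)
  also have "\<dots> \<le> 5" by simp
  finally show ?thesis .
qed

lemma ibp:
  assumes cH: "continuous_on {-pi..pi} H"
  shows "Ahat H l = integral {-pi..pi} H * cis (- (of_int l * pi)) + \<i> * of_int l * Ahat (\<lambda>y. integral {-pi..y} H) l"
proof -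
  define V where "V y = integral {-pi..y} H" for y
  define c where "c y = cis (- (of_int l * y))" for y
  have cV: "continuous_on {-pi..pi} V" unfolding V_def
    by (rule indefinite_integral_continuous_1[OF integrable_continuous_interval[OF cH]])
  have cc: "continuous_on {-pi..pi} c" unfolding c_def by (intro continuous_intros)
  have dc: "(c has_vector_derivative (\<i> * complex_of_real (- of_int l) * c y)) (at y within {-pi..pi})" for y
    using cis_vd[of "- of_int l" y "{-pi..pi}"] unfolding c_def by simp
  have "((\<lambda>y. H y * c y + V y * (\<i> * complex_of_real (- of_int l) * c y)) has_integral (V pi * c pi - V (-pi) * c (-pi))) {-pi..pi}"
  proof (rule fundamental_theorem_of_calculus)
    fix y assume y: "y \<in> {-pi..pi}"
    have dV: "(V has_vector_derivative H y) (at y within {-pi..pi})"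
      unfolding V_def by (rule integral_has_vector_derivative[OF cH y])
    show "((\<lambda>y. V y * c y) has_vector_derivative H y * c y + V y * (\<i> * complex_of_real (- of_int l) * c y)) (at y within {-pi..pi})"
      using has_vector_derivative_mult[OF dV dc[of y]] by (simp add: algebra_simps)
  qed simp
  moreover have "V (-pi) = 0" unfolding V_def by simp
  ultimately have I1: "((\<lambda>y. H y * c y + V y * (\<i> * complex_of_real (- of_int l) * c y)) has_integral (V pi * c pi)) {-pi..pi}"
    by simp
  have I2: "((\<lambda>y. V y * (\<i> * complex_of_real (- of_int l) * c y)) has_integral (- \<i> * of_int l * Ahat V l)) {-pi..pi}"
  proof -
    have "((\<lambda>y. V y * c y) has_integral Ahat V l) {-pi..pi}"
      unfolding Ahat_def c_def
      by (rule integrable_integral, rule integrable_continuous_interval) (use cV in \<open>intro continuous_intros\<close>)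
    from has_integral_mult_right[OF this, of "- \<i> * of_int l"]
    show ?thesis by (simp add: algebra_simps)
  qed
  have "((\<lambda>y. H y * c y) has_integral (V pi * c pi - (- \<i> * of_int l * Ahat V l))) {-pi..pi}"
    using has_integral_diff[OF I1 I2] by simp
  then have "Ahat H l = V pi * c pi + \<i> * of_int l * Ahat V l"
    unfolding Ahat_def c_def[symmetric] by (simp add: integral_unique)
  then show ?thesis unfolding V_def c_def by (simp add: V_def[abs_def])
qed

lemma cont_int: "continuous_on {-pi..pi} (u::real\<Rightarrow>complex) \<Longrightarrow> u integrable_on {-pi..pi}"
  by (rule integrable_continuous_interval)

lemma cmod_diff_sq: "(cmod (a - b))\<^sup>2 = (cmod a)\<^sup>2 - 2 * Re (a * cnj b) + (cmod b)\<^sup>2"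
  by (simp only: cmod_power2) (simp add: power2_eq_square algebra_simps)

lemma bessel:
  fixes V :: "real \<Rightarrow> complex"
  assumes cV: "continuous_on {-pi..pi} V" and fin: "finite L"
  shows "(\<Sum>l\<in>L. (cmod (Ahat V l))\<^sup>2) \<le> 2*pi * integral {-pi..pi} (\<lambda>y. (cmod (V y))\<^sup>2)"
proof -
  define a where "a l = Ahat V l" for l
  define cc where "cc l = a l / complex_of_real (2*pi)" for l
  define e where "e l y = cis (of_int l * y)" for l and y::real
  define P where "P y = (\<Sum>l\<in>L. cc l * e l y)" for y
  define S where "S = (\<Sum>l\<in>L. (cmod (a l))\<^sup>2)"
  have ce: "continuous_on {-pi..pi} (e l)" for l unfolding e_def by (intro continuous_intros)
  have cP: "continuous_on {-pi..pi} P" unfolding P_def e_def by (intro continuous_intros)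
  have orth: "integral {-pi..pi} (\<lambda>y. e l y * cnj (e m y)) = (if l = m then complex_of_real (2*pi) else 0)" for l m
  proof -
    have "e l y * cnj (e m y) = cis (of_int (l - m) * y)" for y
      unfolding e_def cis_cnj by (simp add: cis_mult algebra_simps)
    then show ?thesis using cis_int_integral[of "l - m"] by simp
  qed
  have A: "integral {-pi..pi} (\<lambda>y. V y * cnj (P y)) = complex_of_real (S / (2*pi))"
  proof -
    have eq: "V y * cnj (P y) = (\<Sum>l\<in>L. cnj (cc l) * (V y * cis (- (of_int l * y))))" for y
      unfolding P_def e_def by (simp add: sum_distrib_left cis_cnj algebra_simps)
    have "integral {-pi..pi} (\<lambda>y. V y * cnj (P y)) = (\<Sum>l\<in>L. cnj (cc l) * a l)"
      unfolding eq a_def Ahat_def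
      by (subst integral_sum[OF fin]) (auto intro!: cont_int continuous_intros cV simp: integral_mult_right)
    also have "\<dots> = (\<Sum>l\<in>L. complex_of_real ((cmod (a l))\<^sup>2 / (2*pi)))"
    proof (intro sum.cong refl)
      fix l
      have "cnj (cc l) * a l = (a l * cnj (a l)) / complex_of_real (2*pi)" unfolding cc_def by simp
      also have "\<dots> = complex_of_real ((cmod (a l))\<^sup>2) / complex_of_real (2*pi)" by (simp only: complex_norm_square)
      also have "\<dots> = complex_of_real ((cmod (a l))\<^sup>2 / (2*pi))" by simp
      finally show "cnj (cc l) * a l = complex_of_real ((cmod (a l))\<^sup>2 / (2*pi))" .
    qed
    also have "\<dots> = complex_of_real (S / (2*pi))" unfolding S_def by (simp add: sum_divide_distrib)
    finally show ?thesis .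
  qed
  have B: "integral {-pi..pi} (\<lambda>y. P y * cnj (P y)) = complex_of_real (S / (2*pi))"
  proof -
    have eq: "P y * cnj (P y) = (\<Sum>l\<in>L. \<Sum>m\<in>L. cc l * cnj (cc m) * (e l y * cnj (e m y)))" for y
      unfolding P_def by (simp add: sum_distrib_left sum_distrib_right algebra_simps) (rule sum.swap)
    have "integral {-pi..pi} (\<lambda>y. P y * cnj (P y)) = (\<Sum>l\<in>L. \<Sum>m\<in>L. cc l * cnj (cc m) * integral {-pi..pi} (\<lambda>y. e l y * cnj (e m y)))"
      unfolding eq
      by (subst integral_sum[OF fin], force intro!: cont_int continuous_intros ce,
          intro sum.cong refl, subst integral_sum[OF fin], force intro!: cont_int continuous_intros ce)
         (auto intro!: sum.cong simp: integral_mult_right)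
    also have "\<dots> = (\<Sum>l\<in>L. cc l * cnj (cc l) * complex_of_real (2*pi))"
      unfolding orth by (simp add: if_distrib fin cong: if_cong)
    also have "\<dots> = (\<Sum>l\<in>L. complex_of_real ((cmod (a l))\<^sup>2 / (2*pi)))"
    proof (intro sum.cong refl)
      fix l
      have "cc l * cnj (cc l) * complex_of_real (2*pi) = (a l * cnj (a l)) / complex_of_real (2*pi)"
        unfolding cc_def by (simp add: field_simps power2_eq_square)
      also have "\<dots> = complex_of_real ((cmod (a l))\<^sup>2) / complex_of_real (2*pi)" by (simp only: complex_norm_square)
      also have "\<dots> = complex_of_real ((cmod (a l))\<^sup>2 / (2*pi))" by simp
      finally show "cc l * cnj (cc l) * complex_of_real (2*pi) = complex_of_real ((cmod (a l))\<^sup>2 / (2*pi))" .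
    qed
    also have "\<dots> = complex_of_real (S / (2*pi))" unfolding S_def by (simp add: sum_divide_distrib)
    finally show ?thesis .
  qed
  have cVP: "continuous_on {-pi..pi} (\<lambda>y. V y * cnj (P y))" by (intro continuous_intros cV cP)
  have iA: "((\<lambda>y. Re (V y * cnj (P y))) has_integral (S / (2*pi))) {-pi..pi}"
    using has_integral_Re[OF integrable_integral[OF cont_int[OF cVP]]] unfolding A by simp
  have iB: "((\<lambda>y. (cmod (P y))\<^sup>2) has_integral (S / (2*pi))) {-pi..pi}"
  proof -
    have cPP: "continuous_on {-pi..pi} (\<lambda>y. P y * cnj (P y))" by (intro continuous_intros cP)
    have "((\<lambda>y. Re (P y * cnj (P y))) has_integral (S / (2*pi))) {-pi..pi}"
      using has_integral_Re[OF integrable_integral[OF cont_int[OF cPP]]] unfolding B by simp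
    moreover have "Re (P y * cnj (P y)) = (cmod (P y))\<^sup>2" for y
      by (simp add: complex_norm_square[symmetric])
    ultimately show ?thesis by simp
  qed
  have iV: "((\<lambda>y. (cmod (V y))\<^sup>2) has_integral integral {-pi..pi} (\<lambda>y. (cmod (V y))\<^sup>2)) {-pi..pi}"
    by (intro integrable_integral integrable_continuous_interval continuous_intros cV)
  have "((\<lambda>y. (cmod (V y - P y))\<^sup>2) has_integral
        (integral {-pi..pi} (\<lambda>y. (cmod (V y))\<^sup>2) - 2 * (S / (2*pi)) + S / (2*pi))) {-pi..pi}"
    unfolding cmod_diff_sq
    by (intro has_integral_add has_integral_diff iV iB has_integral_mult_right iA)
  then have "0 \<le> integral {-pi..pi} (\<lambda>y. (cmod (V y))\<^sup>2) - 2 * (S / (2*pi)) + S / (2*pi)"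
    by (rule has_integral_nonneg) simp
  then have "S / (2*pi) \<le> integral {-pi..pi} (\<lambda>y. (cmod (V y))\<^sup>2)" by simp
  then show ?thesis unfolding S_def a_def by (simp add: field_simps)
qed

lemma A_bound:
  assumes cH: "continuous_on {-pi..pi} H"
    and W: "\<And>y. y \<in> {-pi..pi} \<Longrightarrow> cmod (integral {-pi..y} H) \<le> W" and fin: "finite L"
  shows "(\<Sum>l\<in>L. (cmod (Ahat H l))\<^sup>2 / (1 + (of_int l)\<^sup>2)) \<le> (10 + 8*pi\<^sup>2) * W\<^sup>2"
proof -
  define V where "V y = integral {-pi..y} H" for y
  have cV: "continuous_on {-pi..pi} V" unfolding V_def
    by (rule indefinite_integral_continuous_1[OF integrable_continuous_interval[OF cH]])
  have W0: "W \<ge> 0" using W[of pi] by (smt (verit) atLeastAtMost_iff norm_ge_zero pi_ge_zero)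
  have VW: "cmod (V y) \<le> W" if "y \<in> {-pi..pi}" for y unfolding V_def using W[OF that] .
  have pt: "(cmod (Ahat H l))\<^sup>2 / (1 + (of_int l)\<^sup>2) \<le> 2 * W\<^sup>2 * (1 / (1 + (of_int l)\<^sup>2)) + 2 * (cmod (Ahat V l))\<^sup>2" for l
  proof -
    have "Ahat H l = V pi * cis (- (of_int l * pi)) + \<i> * of_int l * Ahat V l"
      using ibp[OF cH, of l] unfolding V_def[abs_def] by simp
    then have "cmod (Ahat H l) \<le> cmod (V pi * cis (- (of_int l * pi))) + cmod (\<i> * of_int l * Ahat V l)"
      by (simp add: norm_triangle_ineq)
    also have "\<dots> = cmod (V pi) + \<bar>of_int l\<bar> * cmod (Ahat V l)" by (simp add: norm_mult)
    also have "\<dots> \<le> W + \<bar>of_int l\<bar> * cmod (Ahat V l)" using VW[of pi] by simp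
    finally have b1: "cmod (Ahat H l) \<le> W + \<bar>of_int l\<bar> * cmod (Ahat V l)" .
    define x where "x = \<bar>of_int l :: real\<bar> * cmod (Ahat V l)"
    have x0: "x \<ge> 0" unfolding x_def by simp
    have "(cmod (Ahat H l))\<^sup>2 \<le> (W + x)\<^sup>2" using b1 unfolding x_def by (intro power_mono) auto
    also have "\<dots> \<le> 2 * W\<^sup>2 + 2 * x\<^sup>2" by (smt (verit) sum_squares_bound power2_sum sum_power2_ge_zero
          mult_2 power2_eq_square sum_squares_ge_zero)
    finally have b2: "(cmod (Ahat H l))\<^sup>2 \<le> 2 * W\<^sup>2 + 2 * x\<^sup>2" .
    have x2: "x\<^sup>2 = (of_int l)\<^sup>2 * (cmod (Ahat V l))\<^sup>2" unfolding x_def by (simp add: power_mult_distrib)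
    have d: "1 + (of_int l :: real)\<^sup>2 > 0" by (simp add: add_pos_nonneg)
    have "(cmod (Ahat H l))\<^sup>2 / (1 + (of_int l)\<^sup>2) \<le> (2 * W\<^sup>2 + 2 * x\<^sup>2) / (1 + (of_int l)\<^sup>2)"
      using b2 d by (intro divide_right_mono) auto
    also have "\<dots> = 2 * W\<^sup>2 * (1 / (1 + (of_int l)\<^sup>2)) + 2 * (cmod (Ahat V l))\<^sup>2 * ((of_int l)\<^sup>2 / (1 + (of_int l)\<^sup>2))"
      unfolding x2 by (simp add: add_divide_distrib)
    also have "\<dots> \<le> 2 * W\<^sup>2 * (1 / (1 + (of_int l)\<^sup>2)) + 2 * (cmod (Ahat V l))\<^sup>2 * 1"
      using d by (intro add_left_mono mult_left_mono) auto
    finally show ?thesis by simp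
  qed
  have "(\<Sum>l\<in>L. (cmod (Ahat H l))\<^sup>2 / (1 + (of_int l)\<^sup>2))
      \<le> (\<Sum>l\<in>L. 2 * W\<^sup>2 * (1 / (1 + (of_int l)\<^sup>2)) + 2 * (cmod (Ahat V l))\<^sup>2)"
    by (rule sum_mono) (rule pt)
  also have "\<dots> = 2 * W\<^sup>2 * (\<Sum>l\<in>L. 1 / (1 + (of_int l)\<^sup>2)) + 2 * (\<Sum>l\<in>L. (cmod (Ahat V l))\<^sup>2)"
    by (simp add: sum.distrib sum_distrib_left)
  also have "\<dots> \<le> 2 * W\<^sup>2 * 5 + 2 * (2*pi * integral {-pi..pi} (\<lambda>y. (cmod (V y))\<^sup>2))"
    by (intro add_mono mult_left_mono inv_sq_sum fin bessel cV) auto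
  also have "\<dots> \<le> 2 * W\<^sup>2 * 5 + 2 * (2*pi * (2 * pi * W\<^sup>2))"
  proof -
    have "integral {-pi..pi} (\<lambda>y. (cmod (V y))\<^sup>2) \<le> integral {-pi..pi} (\<lambda>y. W\<^sup>2)"
      by (intro integral_le integrable_continuous_interval continuous_intros cV)
         (use VW in \<open>auto intro!: power_mono\<close>)
    also have "\<dots> = 2 * pi * W\<^sup>2" by simp
    finally show ?thesis by simp
  qed
  also have "\<dots> = (10 + 8*pi\<^sup>2) * W\<^sup>2" by (simp add: power2_eq_square algebra_simps)
  finally show ?thesis .
qed

lemma sum_fst_eq:
  fixes a :: "int \<Rightarrow> real" and F :: "(int \<times> int) set"
  assumes "finite F"
  shows "(\<Sum>\<xi>\<in>F. if fst \<xi> = k then a (snd \<xi>) else 0) = (\<Sum>l\<in>snd ` {\<xi>\<in>F. fst \<xi> = k}. a l)"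
proof -
  have inj: "inj_on snd {\<xi>\<in>F. fst \<xi> = k}" by (auto simp: inj_on_def prod_eq_iff)
  have "(\<Sum>\<xi>\<in>F. if fst \<xi> = k then a (snd \<xi>) else 0) = (\<Sum>\<xi>\<in>{\<xi>\<in>F. fst \<xi> = k}. a (snd \<xi>))"
    using assms by (simp add: sum.inter_filter)
  also have "\<dots> = (\<Sum>l\<in>snd ` {\<xi>\<in>F. fst \<xi> = k}. a l)" by (simp add: sum.reindex[OF inj])
  finally show ?thesis .
qed

lemma Hm1_rho:
  assumes cf: "continuous_on UNIV f" and cg: "continuous_on UNIV g"
    and W1: "\<And>y. y \<in> {-pi..pi} \<Longrightarrow> cmod (integral {-pi..y} (H1 f g t)) \<le> W"
    and W2: "\<And>y. y \<in> {-pi..pi} \<Longrightarrow> cmod (integral {-pi..y} (H2 f g t)) \<le> W"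
  shows "Hm1_torus_sq (rho f g t) \<le> ennreal (2 * ((10 + 8*pi\<^sup>2) * W\<^sup>2) / (16*pi\<^sup>2))"
proof -
  define a1 where "a1 l = (cmod (Ahat (H1 f g t) l))\<^sup>2 / (1 + (of_int l)\<^sup>2) / (16*pi\<^sup>2)" for l
  define a2 where "a2 l = (cmod (Ahat (H2 f g t) l))\<^sup>2 / (1 + (of_int l)\<^sup>2) / (16*pi\<^sup>2)" for l
  define G where "G \<xi> = (cmod (fourier_coeff (rho f g t) \<xi>))\<^sup>2 / ((of_int (fst \<xi>))\<^sup>2 + (of_int (snd \<xi>))\<^sup>2)" for \<xi>
  have Geq: "G \<xi> = (if fst \<xi> = 1 then a1 (snd \<xi>) else 0) + (if fst \<xi> = -1 then a2 (snd \<xi>) else 0)" for \<xi>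
  proof -
    obtain k l where xi: "\<xi> = (k, l)" by (cases \<xi>)
    have n4: "(cmod (z / complex_of_real (4*pi)))\<^sup>2 = (cmod z)\<^sup>2 / (16*pi\<^sup>2)" for z
      by (simp add: norm_divide power_divide power_mult_distrib)
    have n4': "(cmod (z / (complex_of_real pi * 4)))\<^sup>2 = (cmod z)\<^sup>2 / (16*pi\<^sup>2)" for z
      using n4[of z] by (simp add: mult.commute)
    show ?thesis unfolding G_def xi fc_rho[OF cf cg] a1_def a2_def
      by (auto simp: norm_divide norm_mult power_divide power_mult_distrib field_simps)
  qed
  have cH1: "continuous_on {-pi..pi} (H1 f g t)" by (rule cont_H1[OF cf cg])
  have cH2: "continuous_on {-pi..pi} (H2 f g t)" by (rule cont_H2[OF cf cg])
  have sa1: "(\<Sum>l\<in>L. a1 l) \<le> (10 + 8*pi\<^sup>2) * W\<^sup>2 / (16*pi\<^sup>2)" if "finite L" for L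
    unfolding a1_def sum_divide_distrib[symmetric]
    by (intro divide_right_mono A_bound[OF cH1 W1 that]) auto
  have sa2: "(\<Sum>l\<in>L. a2 l) \<le> (10 + 8*pi\<^sup>2) * W\<^sup>2 / (16*pi\<^sup>2)" if "finite L" for L
    unfolding a2_def sum_divide_distrib[symmetric]
    by (intro divide_right_mono A_bound[OF cH2 W2 that]) auto
  have "Hm1_torus_sq (rho f g t) = (\<integral>\<^sup>+\<xi>. ennreal (G \<xi>) \<partial>count_space (UNIV - {(0,0)}))"
    unfolding Hm1_torus_sq_def G_def ..
  also have "\<dots> \<le> ennreal (2 * ((10 + 8*pi\<^sup>2) * W\<^sup>2) / (16*pi\<^sup>2))"
  proof (rule count_le)
    show "G x \<ge> 0" for x unfolding G_def by simp
    fix F :: "(int \<times> int) set" assume F: "finite F" "F \<subseteq> UNIV - {(0,0)}"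
    have "(\<Sum>\<xi>\<in>F. G \<xi>) = (\<Sum>\<xi>\<in>F. if fst \<xi> = 1 then a1 (snd \<xi>) else 0) + (\<Sum>\<xi>\<in>F. if fst \<xi> = -1 then a2 (snd \<xi>) else 0)"
      unfolding Geq by (simp add: sum.distrib)
    also have "\<dots> = (\<Sum>l\<in>snd ` {\<xi>\<in>F. fst \<xi> = 1}. a1 l) + (\<Sum>l\<in>snd ` {\<xi>\<in>F. fst \<xi> = -1}. a2 l)"
      using F by (simp add: sum_fst_eq)
    also have "\<dots> \<le> (10 + 8*pi\<^sup>2) * W\<^sup>2 / (16*pi\<^sup>2) + (10 + 8*pi\<^sup>2) * W\<^sup>2 / (16*pi\<^sup>2)"
      using F by (intro add_mono sa1 sa2) auto
    also have "\<dots> = 2 * ((10 + 8*pi\<^sup>2) * W\<^sup>2) / (16*pi\<^sup>2)" by simp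
    finally show "(\<Sum>\<xi>\<in>F. G \<xi>) \<le> 2 * ((10 + 8*pi\<^sup>2) * W\<^sup>2) / (16*pi\<^sup>2)" .
  qed
  finally show ?thesis .
qed

lemma cos_quartic: "cos (x::real) \<le> 1 - x^2/2 + x^4/24"
proof -
  obtain t where t: "cos x = (\<Sum>m<4. cos_coeff m * x ^ m) + (cos (t + 1/2 * real 4 * pi) / fact 4) * x ^ 4"
    using Maclaurin_cos_expansion[of x 4] by blast
  have s: "(\<Sum>m<4. cos_coeff m * x ^ m) = 1 - x^2/2"
    by (simp add: lessThan_nat_numeral cos_coeff_def power2_eq_square)
  have "(cos (t + 1/2 * real 4 * pi) / fact 4) * x ^ 4 \<le> (1 / fact 4) * x ^ 4"
    by (intro mult_right_mono divide_right_mono) auto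
  then show ?thesis using t s by (simp add: fact_numeral)
qed

lemma cos_le_sq: "\<bar>u::real\<bar> \<le> 1 \<Longrightarrow> cos u \<le> 1 - (11/24) * u^2"
proof -
  assume u: "\<bar>u\<bar> \<le> 1"
  have "u^2 \<le> 1" using u by (simp add: abs_square_le_1)
  then have "u^4 \<le> u^2" by (metis power2_eq_square mult_left_le zero_le_power2 power_add numeral_Bit0 numeral_One one_add_one)
  then show ?thesis using cos_quartic[of u] by linarith
qed

lemma sin_lip: "\<bar>sin a - sin b\<bar> \<le> \<bar>a - b::real\<bar>"
proof -
  have e: "\<bar>sin a - sin b\<bar> = 2 * \<bar>sin ((a - b) / 2)\<bar> * \<bar>cos ((a + b) / 2)\<bar>"
    unfolding sin_diff_sin by (simp add: abs_mult)
  have c: "\<bar>cos ((a + b) / 2)\<bar> \<le> 1" by simp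
  have "2 * \<bar>sin ((a - b) / 2)\<bar> * \<bar>cos ((a + b) / 2)\<bar> \<le> 2 * \<bar>sin ((a - b) / 2)\<bar>"
    using mult_left_mono[OF c, of "2 * \<bar>sin ((a - b) / 2)\<bar>"] by simp
  moreover have "2 * \<bar>sin ((a - b) / 2)\<bar> \<le> \<bar>a - b\<bar>" using abs_sin_x_le_abs_x[of "(a-b)/2"] by simp
  ultimately show ?thesis unfolding e by linarith
qed

lemma cis_lip: "cmod (cis a - cis b) \<le> \<bar>a - b\<bar>"
proof -
  define u where "u = a - b"
  have "cis a - cis b = cis b * (cis u - 1)" unfolding u_def by (simp add: cis_mult algebra_simps)
  then have e: "cmod (cis a - cis b) = cmod (cis u - 1)" by (simp add: norm_mult)
  have "(cmod (cis u - 1))\<^sup>2 = (cos u - 1)^2 + (sin u)^2" by (simp add: cmod_power2)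
  also have "\<dots> = 2 - 2 * cos u" by (simp add: power2_eq_square algebra_simps sin_squared_eq)
  also have "\<dots> = 4 * (sin (u/2))^2" using cos_double_sin[of "u/2"] by simp
  also have "\<dots> \<le> 4 * (u/2)^2"
  proof -
    have "(sin (u/2))^2 \<le> \<bar>u/2\<bar>^2" by (rule sq_le[OF abs_sin_x_le_abs_x])
    then show ?thesis by (simp only: power2_abs)
  qed
  also have "\<dots> = u^2" by (simp add: power2_eq_square)
  finally have "(cmod (cis u - 1))\<^sup>2 \<le> u^2" .
  then have "cmod (cis u - 1) \<le> \<bar>u\<bar>" by (metis abs_le_square_iff abs_norm_cancel)
  then show ?thesis unfolding e u_def .
qed

lemma lip_real:
  fixes f f' :: "real \<Rightarrow> real" and a b x y L :: real
  assumes d: "\<And>x. DERIV f x :> f' x" and L: "\<And>x. x \<in> {a..b} \<Longrightarrow> \<bar>f' x\<bar> \<le> L"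
    and x: "x \<in> {a..b}" and y: "y \<in> {a..b}"
  shows "\<bar>f x - f y\<bar> \<le> L * \<bar>x - y\<bar>"
proof -
  have *: "\<bar>f v - f u\<bar> \<le> L * \<bar>v - u\<bar>" if "u < v" "u \<in> {a..b}" "v \<in> {a..b}" for u v :: real
  proof -
    obtain z where z: "u < z" "z < v" "f v - f u = (v - u) * f' z"
      using MVT2[of u v f f'] d \<open>u < v\<close> by blast
    have "z \<in> {a..b}" using z that by auto
    then have "\<bar>f' z\<bar> \<le> L" by (rule L)
    then show ?thesis using z that by (simp add: abs_mult mult.commute mult_left_mono)
  qed
  show ?thesis
  proof (cases "x = y")
    case True then show ?thesis by simp
  next
    case False
    then show ?thesis
    proof (cases "x < y")
      case True then show ?thesis using *[of x y] x y by (simp add: abs_minus_commute)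
    next
      case False then show ?thesis using *[of y x] x y \<open>x \<noteq> y\<close> by simp
    qed
  qed
qed

lemma int_norm_le:
  fixes f :: "real \<Rightarrow> 'a::euclidean_space"
  assumes "f integrable_on {a..b}" "a \<le> b" "\<And>x. x \<in> {a..b} \<Longrightarrow> norm (f x) \<le> B"
  shows "norm (integral {a..b} f) \<le> B * (b - a)"
proof -
  have B0: "0 \<le> B" using assms(3)[of a] assms(2) by (smt (verit) atLeastAtMost_iff norm_ge_zero)
  have hi: "(f has_integral integral {a..b} f) (cbox a b)" using assms(1) by (simp add: integrable_integral)
  from has_integral_bound[OF B0 hi] assms(3) show ?thesis using assms(2) by simp
qed

lemma cis_cont: "continuous_on S (\<lambda>s::real. cis (c * sin (real N * s)))"
  by (intro continuous_intros)

lemma reflect_shift_zero: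
  fixes g :: "real \<Rightarrow> real"
  assumes cg: "continuous_on UNIV g" and odd: "\<And>u. g (d - u) = - g u"
  shows "integral {0..d} g = 0"
proof -
  have "integral {0..d} g = integral {-d..0} (\<lambda>x. g (-x))" using Henstock_Kurzweil_Integration.integral_reflect_real[of d 0 g] by simp
  also have "\<dots> = integral {-d - (-d)..0 - (-d)} (\<lambda>x. g (-(x + (-d))))"
    by (rule integral_shift_real_ivl[symmetric])
  also have "\<dots> = integral {0..d} (\<lambda>x. - g x)"
    using odd by (simp add: algebra_simps)
  also have "\<dots> = - integral {0..d} g" by (simp add: integral_neg)
  finally show ?thesis by simp
qed

lemma sin_sq_integral:
  assumes N: "N > 0"
  shows "integral {0..2*pi/real N} (\<lambda>s. (sin (real N * s))\<^sup>2) = pi / real N"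
proof -
  define F where "F s = s/2 - sin (2 * real N * s) / (4 * real N)" for s
  have "((\<lambda>s. (sin (real N * s))\<^sup>2) has_integral (F (2*pi/real N) - F 0)) {0..2*pi/real N}"
  proof (rule fundamental_theorem_of_calculus)
    fix s :: real
    have "(F has_real_derivative (1/2 - cos (2 * real N * s) * (2 * real N) / (4 * real N))) (at s within {0..2*pi/real N})"
      unfolding F_def by (auto intro!: derivative_eq_intros)
    moreover have "1/2 - cos (2 * real N * s) * (2 * real N) / (4 * real N) = (sin (real N * s))\<^sup>2"
      using N cos_double_sin[of "real N * s"] by (simp add: field_simps)
    ultimately show "(F has_vector_derivative (sin (real N * s))\<^sup>2) (at s within {0..2*pi/real N})"
      by (simp add: has_real_derivative_iff_has_vector_derivative)
  qed (use N in simp)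
  moreover have "F (2*pi/real N) - F 0 = pi / real N"
  proof -
    have "2 * real N * (2 * pi / real N) = 2 * pi * of_int 2" using N by simp
    then have "sin (2 * real N * (2 * pi / real N)) = 0" by (metis sin_int_2pin)
    then show ?thesis unfolding F_def by simp
  qed
  ultimately show ?thesis by (simp add: integral_unique)
qed

lemma block_B:
  fixes N :: nat and \<theta> \<sigma> :: real
  assumes N: "N > 0" and th: "0 \<le> \<theta>" "\<theta> \<le> 1" and sg: "\<sigma> = 1 \<or> \<sigma> = -1"
  defines "B \<equiv> integral {0..2*pi/real N} (\<lambda>s. cis (\<sigma> * \<theta> * sin (real N * s)))"
  shows "Im B = 0" "0 \<le> Re B" "Re B \<le> (1 - (11/48) * \<theta>^2) * (2*pi/real N)"
proof -
  define d where "d = 2*pi/real N"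
  have d0: "d > 0" unfolding d_def using N by simp
  have Nd: "real N * d = 2 * pi" unfolding d_def using N by simp
  have int: "(\<lambda>s. cis (\<sigma> * \<theta> * sin (real N * s))) integrable_on {0..d}"
    by (intro integrable_continuous_interval continuous_intros)
  have hB: "((\<lambda>s. cis (\<sigma> * \<theta> * sin (real N * s))) has_integral B) {0..d}"
    unfolding B_def d_def[symmetric] using int by (rule integrable_integral)
  have ReB: "Re B = integral {0..d} (\<lambda>s. cos (\<theta> * sin (real N * s)))"
  proof -
    have "((\<lambda>s. cos (\<sigma> * \<theta> * sin (real N * s))) has_integral Re B) {0..d}"
      using has_integral_Re[OF hB] by simp
    moreover have "cos (\<sigma> * \<theta> * sin (real N * s)) = cos (\<theta> * sin (real N * s))" for s
      using sg by auto
    ultimately show ?thesis by (simp add: integral_unique)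
  qed
  show "Im B = 0"
  proof -
    have "((\<lambda>s. sin (\<sigma> * \<theta> * sin (real N * s))) has_integral Im B) {0..d}"
      using has_integral_Im[OF hB] by simp
    then have "Im B = integral {0..d} (\<lambda>s. sin (\<sigma> * \<theta> * sin (real N * s)))" by (simp add: integral_unique)
    also have "\<dots> = 0"
    proof (rule reflect_shift_zero)
      show "continuous_on UNIV (\<lambda>s. sin (\<sigma> * \<theta> * sin (real N * s)))" by (intro continuous_intros)
      fix u
      have "real N * (d - u) = - (real N * u) + 2 * pi * of_int 1" using Nd by (simp add: algebra_simps)
      then have "sin (real N * (d - u)) = - sin (real N * u)" by (metis sin_shift_int sin_minus)
      then show "sin (\<sigma> * \<theta> * sin (real N * (d - u))) = - sin (\<sigma> * \<theta> * sin (real N * u))" by simp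
    qed
    finally show ?thesis .
  qed
  have ci: "(\<lambda>s. cos (\<theta> * sin (real N * s))) integrable_on {0..d}"
    by (intro integrable_continuous_interval continuous_intros)
  show "0 \<le> Re B" unfolding ReB
  proof (rule integral_nonneg[OF ci])
    fix s
    have "\<bar>\<theta> * sin (real N * s)\<bar> \<le> 1" using th by (simp add: abs_mult mult_le_one)
    then have "- (pi/2) \<le> \<theta> * sin (real N * s)" "\<theta> * sin (real N * s) \<le> pi/2" using pi_ge_two by linarith+
    then show "0 \<le> cos (\<theta> * sin (real N * s))" by (rule cos_ge_zero)
  qed
  have "Re B \<le> integral {0..d} (\<lambda>s. 1 - (11/24) * \<theta>^2 * (sin (real N * s))\<^sup>2)"
    unfolding ReB
  proof (rule integral_le[OF ci])
    show "(\<lambda>s. 1 - (11/24) * \<theta>^2 * (sin (real N * s))\<^sup>2) integrable_on {0..d}"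
      by (intro integrable_continuous_interval continuous_intros)
    fix s
    have "\<bar>\<theta> * sin (real N * s)\<bar> \<le> 1" using th by (simp add: abs_mult mult_le_one)
    from cos_le_sq[OF this]
    show "cos (\<theta> * sin (real N * s)) \<le> 1 - (11/24) * \<theta>^2 * (sin (real N * s))\<^sup>2"
      by (simp add: power_mult_distrib)
  qed
  also have "\<dots> = d - (11/24) * \<theta>^2 * (pi / real N)"
  proof -
    have i1: "((\<lambda>s. 1::real) has_integral d) {0..d}" using has_integral_const_real[of "1::real" 0 d] d0 by simp
    have i2: "((\<lambda>s. (sin (real N * s))\<^sup>2) has_integral (pi / real N)) {0..d}"
    proof -
      have "(\<lambda>s. (sin (real N * s))\<^sup>2) integrable_on {0..d}"
        by (intro integrable_continuous_interval continuous_intros)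
      then show ?thesis using sin_sq_integral[OF N] unfolding d_def[symmetric]
        by (metis integrable_integral)
    qed
    have "((\<lambda>s. 1 - (11/24) * \<theta>^2 * (sin (real N * s))\<^sup>2) has_integral (d - (11/24) * \<theta>^2 * (pi / real N))) {0..d}"
      by (intro has_integral_diff i1 has_integral_mult_right i2)
    then show ?thesis by (rule integral_unique)
  qed
  also have "\<dots> = (1 - (11/48) * \<theta>^2) * (2*pi/real N)" unfolding d_def using N by (simp add: field_simps)
  finally show "Re B \<le> (1 - (11/48) * \<theta>^2) * (2*pi/real N)" .
qed

lemma averaging:
  fixes F :: "real \<Rightarrow> complex" and N :: nat and \<theta> \<sigma> M K A y :: real
  assumes N: "N > 0" "even N" and th: "0 \<le> \<theta>" "\<theta> \<le> 1" and sg: "\<sigma> = 1 \<or> \<sigma> = -1"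
    and cF: "continuous_on {-pi..pi} F"
    and M: "\<And>y. y \<in> {-pi..pi} \<Longrightarrow> cmod (F y) \<le> M"
    and K: "\<And>x y. x \<in> {-pi..pi} \<Longrightarrow> y \<in> {-pi..pi} \<Longrightarrow> cmod (F x - F y) \<le> K * \<bar>x - y\<bar>"
    and A: "\<And>y. y \<in> {-pi..pi} \<Longrightarrow> cmod (integral {-pi..y} F) \<le> A"
    and y: "y \<in> {-pi..pi}"
  shows "cmod (integral {-pi..y} (\<lambda>s. F s * cis (\<sigma> * \<theta> * sin (real N * s))))
          \<le> (1 - (11/48) * \<theta>^2) * A + (4*pi*K + M) * (2*pi/real N)"
proof -
  define d where "d = 2*pi/real N"
  define E where "E s = cis (\<sigma> * \<theta> * sin (real N * s))" for s
  define x where "x j = -pi + real j * d" for j :: nat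
  define B where "B = integral {0..d} E"
  define \<beta> where "\<beta> = B / complex_of_real d"
  define q where "q = 1 - (11/48) * \<theta>^2"
  have d0: "d > 0" unfolding d_def using N by simp
  have Nd: "real N * d = 2 * pi" unfolding d_def using N by simp
  have t2: "\<theta>^2 \<le> 1" using th by (simp add: power_le_one)
  have q0: "0 \<le> q" "q \<le> 1" unfolding q_def using t2 by auto
  have K0: "K \<ge> 0"
  proof -
    have "0 \<le> K * \<bar>(-pi) - pi\<bar>" using K[of "-pi" pi] by (smt (verit) atLeastAtMost_iff norm_ge_zero pi_ge_zero)
    then show ?thesis using pi_gt_zero by (auto simp: zero_le_mult_iff)
  qed
  have A0: "A \<ge> 0" using A[of "-pi"] by simp
  have M0: "M \<ge> 0" using M[of 0] by (smt (verit) atLeastAtMost_iff norm_ge_zero pi_ge_zero)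
  have cE: "continuous_on S E" for S unfolding E_def by (intro continuous_intros)
  have Ebd: "cmod (E s) = 1" for s unfolding E_def by simp
  have Bprops: "Im B = 0" "0 \<le> Re B" "Re B \<le> q * d"
    using block_B[OF N(1) th sg] unfolding B_def E_def q_def d_def by auto
  have cB: "cmod B \<le> q * d"
  proof -
    have "B = complex_of_real (Re B)" using Bprops(1) by (simp add: complex_eq_iff)
    then have "cmod B = \<bar>Re B\<bar>" by (metis norm_of_real)
    then show ?thesis using Bprops by simp
  qed
  have b1: "cmod \<beta> \<le> q" unfolding \<beta>_def using cB d0 by (simp add: norm_divide divide_le_eq)
  have bB: "\<beta> * complex_of_real d = B" unfolding \<beta>_def using d0 by simp
  have x0: "x 0 = -pi" and xN: "x N = pi" and xS: "x (Suc j) = x j + d" for j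
    unfolding x_def using Nd by (auto simp: algebra_simps)
  have xin: "x j \<in> {-pi..pi}" if "j \<le> N" for j
  proof -
    have "real j * d \<le> real N * d" using that d0 by (intro mult_right_mono) auto
    then show ?thesis unfolding x_def using Nd d0 by auto
  qed
  have blockE: "integral {x j..x j + d} E = B" for j
  proof -
    have "integral {x j - x j..x j + d - x j} (\<lambda>s. E (s + x j)) = integral {x j..x j + d} E"
      by (rule integral_shift_real_ivl)
    moreover have "E (s + x j) = E s" for s
    proof -
      obtain h where h: "N = 2 * h" using N(2) by (auto elim: evenE)
      have "real N * (s + x j) = real N * s + 2 * pi * of_int (int j - int h)"
        unfolding x_def using Nd by (simp add: h algebra_simps)
      then have "sin (real N * (s + x j)) = sin (real N * s)"
        using sin_shift_int[of "real N * s" "int j - int h"] by simp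
      then show ?thesis unfolding E_def by simp
    qed
    ultimately show ?thesis unfolding B_def by simp
  qed
  have intsub: "f integrable_on {a..b}" if "continuous_on {-pi..pi} f" "-pi \<le> a" "b \<le> pi" for f :: "real \<Rightarrow> complex" and a b
    by (rule integrable_continuous_interval, rule continuous_on_subset[OF that(1)]) (use that in auto)
  have cFE: "continuous_on {-pi..pi} (\<lambda>s. F s * E s)" by (intro continuous_intros cF cE)
  have block: "cmod (integral {x j..x j + d} (\<lambda>s. F s * E s) - \<beta> * integral {x j..x j + d} F) \<le> 2 * K * d * d"
    if j: "j < N" for j
  proof -
    define a where "a = x j"
    define c where "c = F a"
    have a1: "-pi \<le> a" "a + d \<le> pi" unfolding a_def using xin[of j] xin[of "Suc j"] j xS[of j] by auto
    have i1: "((\<lambda>s. F s * E s) has_integral integral {a..a+d} (\<lambda>s. F s * E s)) {a..a+d}"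
      by (rule integrable_integral, rule intsub[OF cFE]) (use a1 in auto)
    have i2: "(F has_integral integral {a..a+d} F) {a..a+d}"
      by (rule integrable_integral, rule intsub[OF cF]) (use a1 in auto)
    have i3: "(E has_integral B) {a..a+d}"
      using blockE[of j] integrable_integral[OF integrable_continuous_interval[OF cE]] unfolding a_def by metis
    have i4: "((\<lambda>s. c * \<beta>) has_integral (c * \<beta> * complex_of_real d)) {a..a+d}"
      using has_integral_const_real[of "c * \<beta>" a "a+d"] d0 by (simp add: scaleR_conv_of_real mult.commute)
    have iG: "((\<lambda>s. (F s - c) * (E s - \<beta>)) has_integral
        (integral {a..a+d} (\<lambda>s. F s * E s) - \<beta> * integral {a..a+d} F - c * B + c * \<beta> * complex_of_real d)) {a..a+d}"
    proof -
      have "((\<lambda>s. F s * E s - \<beta> * F s - c * E s + c * \<beta>) has_integral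
        (integral {a..a+d} (\<lambda>s. F s * E s) - \<beta> * integral {a..a+d} F - c * B + c * \<beta> * complex_of_real d)) {a..a+d}"
        by (intro has_integral_add has_integral_diff i1 has_integral_mult_right i2 i3 i4)
      moreover have "(F s - c) * (E s - \<beta>) = F s * E s - \<beta> * F s - c * E s + c * \<beta>" for s
        by (simp add: algebra_simps)
      ultimately show ?thesis by simp
    qed
    have val: "integral {a..a+d} (\<lambda>s. F s * E s) - \<beta> * integral {a..a+d} F - c * B + c * \<beta> * complex_of_real d
        = integral {a..a+d} (\<lambda>s. F s * E s) - \<beta> * integral {a..a+d} F"
      using bB by (simp add: algebra_simps)
    have bound: "cmod ((F s - c) * (E s - \<beta>)) \<le> K * d * 2" if s: "s \<in> {a..a+d}" for s
    proof -
      have "cmod (F s - c) \<le> K * \<bar>s - a\<bar>" unfolding c_def using K[of s a] s a1 by auto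
      also have "\<dots> \<le> K * d" using s K0 by (intro mult_left_mono) auto
      finally have f1: "cmod (F s - c) \<le> K * d" .
      have "cmod (E s - \<beta>) \<le> cmod (E s) + cmod \<beta>" by (rule norm_triangle_ineq4)
      also have "\<dots> \<le> 2" using Ebd[of s] b1 q0 by simp
      finally have f2: "cmod (E s - \<beta>) \<le> 2" .
      show ?thesis unfolding norm_mult using f1 f2 K0 d0 by (intro mult_mono) auto
    qed
    have bnd: "cmod (integral {a..a+d} (\<lambda>s. (F s - c) * (E s - \<beta>))) \<le> K * d * 2 * (a + d - a)"
      by (rule int_norm_le[OF has_integral_integrable[OF iG] _ bound]) (use d0 in auto)
    have eq: "integral {a..a+d} (\<lambda>s. (F s - c) * (E s - \<beta>)) = integral {a..a+d} (\<lambda>s. F s * E s) - \<beta> * integral {a..a+d} F"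
      using integral_unique[OF iG] val by simp
    have e2: "K * d * 2 * (a + d - a) = 2 * K * d * d" by simp
    from bnd have "cmod (integral {a..a+d} (\<lambda>s. F s * E s) - \<beta> * integral {a..a+d} F) \<le> 2 * K * d * d"
      by (simp only: eq e2)
    then show ?thesis unfolding a_def .
  qed
  have sum: "cmod (integral {-pi..x J} (\<lambda>s. F s * E s) - \<beta> * integral {-pi..x J} F) \<le> real J * (2 * K * d * d)"
    if "J \<le> N" for J
    using that
  proof (induction J)
    case 0 then show ?case by (simp add: x0)
  next
    case (Suc J)
    have J: "J < N" using Suc by simp
    have xJ: "x J \<in> {-pi..pi}" "x (Suc J) \<in> {-pi..pi}" using xin J Suc.prems by auto
    have c1: "integral {-pi..x J} (\<lambda>s. F s * E s) + integral {x J..x J + d} (\<lambda>s. F s * E s) = integral {-pi..x (Suc J)} (\<lambda>s. F s * E s)"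
      unfolding xS by (rule Henstock_Kurzweil_Integration.integral_combine) (use xJ xS[of J] d0 in \<open>auto intro!: intsub[OF cFE]\<close>)
    have c2: "integral {-pi..x J} F + integral {x J..x J + d} F = integral {-pi..x (Suc J)} F"
      unfolding xS by (rule Henstock_Kurzweil_Integration.integral_combine) (use xJ xS[of J] d0 in \<open>auto intro!: intsub[OF cF]\<close>)
    have "integral {-pi..x (Suc J)} (\<lambda>s. F s * E s) - \<beta> * integral {-pi..x (Suc J)} F
      = (integral {-pi..x J} (\<lambda>s. F s * E s) - \<beta> * integral {-pi..x J} F)
        + (integral {x J..x J + d} (\<lambda>s. F s * E s) - \<beta> * integral {x J..x J + d} F)"
      unfolding c1[symmetric] c2[symmetric] by (simp add: algebra_simps)
    also have "cmod \<dots> \<le> real J * (2 * K * d * d) + 2 * K * d * d"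
      by (rule order_trans[OF norm_triangle_ineq add_mono[OF Suc.IH[OF less_imp_le[OF J]] block[OF J]]])
    finally show ?case by (simp add: algebra_simps)
  qed
  define J where "J = min (nat \<lfloor>(y + pi) / d\<rfloor>) N"
  have JN: "J \<le> N" unfolding J_def by simp
  have yJ: "x J \<le> y" "y \<le> x J + d"
  proof -
    have fl: "real (nat \<lfloor>(y + pi) / d\<rfloor>) = of_int \<lfloor>(y + pi) / d\<rfloor>" using y d0 by simp
    have "real (nat \<lfloor>(y + pi) / d\<rfloor>) \<le> (y + pi) / d" unfolding fl by simp
    then have h1: "real (nat \<lfloor>(y + pi) / d\<rfloor>) * d \<le> y + pi" using d0 by (simp add: le_divide_eq)
    have "J \<le> nat \<lfloor>(y + pi) / d\<rfloor>" unfolding J_def by simp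
    then have "real J * d \<le> real (nat \<lfloor>(y + pi) / d\<rfloor>) * d" using d0 by (intro mult_right_mono) auto
    then have "real J * d \<le> y + pi" using h1 by linarith
    then show "x J \<le> y" unfolding x_def by simp
    show "y \<le> x J + d"
    proof (cases "nat \<lfloor>(y + pi) / d\<rfloor> \<le> N")
      case True
      then have "J = nat \<lfloor>(y + pi) / d\<rfloor>" unfolding J_def by simp
      moreover have "(y + pi) / d < real (nat \<lfloor>(y + pi) / d\<rfloor>) + 1" unfolding fl by linarith
      ultimately have "y + pi < (real J + 1) * d" using d0 by (simp add: divide_less_eq)
      then show ?thesis unfolding x_def by (simp add: algebra_simps)
    next
      case False
      then have "J = N" unfolding J_def by simp
      then show ?thesis using xN y d0 by simp
    qed
  qed
  have xJin: "x J \<in> {-pi..pi}" using xin[OF JN] .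
  have split: "integral {-pi..y} (\<lambda>s. F s * E s) = integral {-pi..x J} (\<lambda>s. F s * E s) + integral {x J..y} (\<lambda>s. F s * E s)"
    by (rule Henstock_Kurzweil_Integration.integral_combine[symmetric]) (use yJ xJin y in \<open>auto intro!: intsub[OF cFE]\<close>)
  have t1: "cmod (integral {x J..y} (\<lambda>s. F s * E s)) \<le> M * d"
  proof -
    have "cmod (integral {x J..y} (\<lambda>s. F s * E s)) \<le> M * (y - x J)"
      by (rule int_norm_le) (use yJ xJin y in \<open>auto intro!: intsub[OF cFE] simp: norm_mult Ebd intro: M\<close>)
    also have "\<dots> \<le> M * d" using yJ M0 by (intro mult_left_mono) auto
    finally show ?thesis .
  qed
  have t2: "cmod (integral {-pi..x J} (\<lambda>s. F s * E s)) \<le> q * A + 4 * pi * K * d"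
  proof -
    have "cmod (integral {-pi..x J} (\<lambda>s. F s * E s)) \<le> cmod (\<beta> * integral {-pi..x J} F) + real J * (2 * K * d * d)"
      using sum[OF JN] norm_triangle_sub[of "integral {-pi..x J} (\<lambda>s. F s * E s)" "\<beta> * integral {-pi..x J} F"]
      by (smt (verit) norm_minus_commute)
    also have "cmod (\<beta> * integral {-pi..x J} F) \<le> q * A"
      unfolding norm_mult using b1 A[OF xJin] q0 by (intro mult_mono) auto
    also have "real J * (2 * K * d * d) \<le> real N * (2 * K * d * d)"
      using JN K0 d0 by (intro mult_right_mono) auto
    also have "real N * (2 * K * d * d) = 4 * pi * K * d" using Nd by (simp add: algebra_simps)
    finally show ?thesis by simp
  qed
  have "cmod (integral {-pi..y} (\<lambda>s. F s * E s)) \<le> q * A + 4 * pi * K * d + M * d"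
    unfolding split using t1 t2 norm_triangle_ineq[of "integral {-pi..x J} (\<lambda>s. F s * E s)" "integral {x J..y} (\<lambda>s. F s * E s)"]
    by linarith
  then show ?thesis unfolding q_def d_def E_def by (simp add: algebra_simps)
qed

definition Fk :: "(real \<Rightarrow> complex) \<Rightarrow> real \<Rightarrow> nat \<Rightarrow> real \<Rightarrow> complex" where
  "Fk h \<sigma> k y = h y * cis (\<sigma> * (\<Sum>n<k. sin (real (NN (Suc n)) * y)))"

lemma NN_pos: "NN k > 0" unfolding NN_def using SS_pos[of k] by simp
lemma NN_even: "even (NN (Suc k))" unfolding NN_def by simp

lemma Fk_Suc: "Fk h \<sigma> (Suc k) y = Fk h \<sigma> k y * cis (\<sigma> * 1 * sin (real (NN (Suc k)) * y))"
  unfolding Fk_def by (simp add: cis_mult algebra_simps)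

lemma sum_sin_lip: "\<bar>(\<Sum>n<k. sin (real (NN (Suc n)) * x)) - (\<Sum>n<k. sin (real (NN (Suc n)) * y))\<bar>
    \<le> real (SS (Suc k)) * \<bar>x - y\<bar>"
proof -
  have "\<bar>(\<Sum>n<k. sin (real (NN (Suc n)) * x)) - (\<Sum>n<k. sin (real (NN (Suc n)) * y))\<bar>
      = \<bar>\<Sum>n<k. sin (real (NN (Suc n)) * x) - sin (real (NN (Suc n)) * y)\<bar>" by (simp add: sum_subtractf)
  also have "\<dots> \<le> (\<Sum>n<k. \<bar>sin (real (NN (Suc n)) * x) - sin (real (NN (Suc n)) * y)\<bar>)" by (rule sum_abs)
  also have "\<dots> \<le> (\<Sum>n<k. real (NN (Suc n)) * \<bar>x - y\<bar>)"
  proof (rule sum_mono)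
    fix n
    have "\<bar>sin (real (NN (Suc n)) * x) - sin (real (NN (Suc n)) * y)\<bar> \<le> \<bar>real (NN (Suc n)) * x - real (NN (Suc n)) * y\<bar>"
      by (rule sin_lip)
    also have "\<dots> = real (NN (Suc n)) * \<bar>x - y\<bar>" by (simp add: abs_mult right_diff_distrib[symmetric])
    finally show "\<bar>sin (real (NN (Suc n)) * x) - sin (real (NN (Suc n)) * y)\<bar> \<le> real (NN (Suc n)) * \<bar>x - y\<bar>" .
  qed
  also have "\<dots> = (\<Sum>n<k. real (NN (Suc n))) * \<bar>x - y\<bar>" by (simp add: sum_distrib_right)
  also have "\<dots> \<le> real (SS (Suc k)) * \<bar>x - y\<bar>" by (intro mult_right_mono sumNN_le) auto
  finally show ?thesis .
qed

lemma Fk_props: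
  assumes sg: "\<sigma> = 1 \<or> \<sigma> = -1"
    and M: "\<And>y. y \<in> {-pi..pi} \<Longrightarrow> cmod (h y) \<le> M0"
    and K: "\<And>x y. x \<in> {-pi..pi} \<Longrightarrow> y \<in> {-pi..pi} \<Longrightarrow> cmod (h x - h y) \<le> K0 * \<bar>x - y\<bar>"
  shows "\<And>y. y \<in> {-pi..pi} \<Longrightarrow> cmod (Fk h \<sigma> k y) \<le> M0"
    and "\<And>x y. x \<in> {-pi..pi} \<Longrightarrow> y \<in> {-pi..pi} \<Longrightarrow> cmod (Fk h \<sigma> k x - Fk h \<sigma> k y) \<le> (K0 + M0 * real (SS (Suc k))) * \<bar>x - y\<bar>"
proof -
  show "cmod (Fk h \<sigma> k y) \<le> M0" if "y \<in> {-pi..pi}" for y unfolding Fk_def using M[OF that] by (simp add: norm_mult)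
  fix x y assume x: "x \<in> {-pi..pi}" and y: "y \<in> {-pi..pi}"
  define S where "S z = (\<Sum>n<k. sin (real (NN (Suc n)) * z))" for z
  have "Fk h \<sigma> k x - Fk h \<sigma> k y = (h x - h y) * cis (\<sigma> * S x) + h y * (cis (\<sigma> * S x) - cis (\<sigma> * S y))"
    unfolding Fk_def S_def by (simp add: algebra_simps)
  also have "cmod \<dots> \<le> cmod (h x - h y) + cmod (h y) * \<bar>\<sigma> * S x - \<sigma> * S y\<bar>"
    by (rule order_trans[OF norm_triangle_ineq]) (auto simp: norm_mult intro!: mult_left_mono cis_lip)
  also have "\<bar>\<sigma> * S x - \<sigma> * S y\<bar> = \<bar>S x - S y\<bar>" using sg by (auto simp: abs_minus_commute)
  also have "cmod (h x - h y) + cmod (h y) * \<bar>S x - S y\<bar> \<le> K0 * \<bar>x - y\<bar> + M0 * (real (SS (Suc k)) * \<bar>x - y\<bar>)"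
    using K[OF x y] M[OF y] sum_sin_lip[where k=k and x=x and y=y] order_trans[OF norm_ge_zero M[OF y]] unfolding S_def
    by (intro add_mono mult_mono) auto
  finally show "cmod (Fk h \<sigma> k x - Fk h \<sigma> k y) \<le> (K0 + M0 * real (SS (Suc k))) * \<bar>x - y\<bar>"
    by (simp add: algebra_simps)
qed

lemma cont_Fk: "continuous_on {-pi..pi} h \<Longrightarrow> continuous_on {-pi..pi} (Fk h \<sigma> k)"
  unfolding Fk_def[abs_def] by (intro continuous_intros)

lemma Fk_decay:
  assumes sg: "\<sigma> = 1 \<or> \<sigma> = -1" and ch: "continuous_on {-pi..pi} h"
    and M0: "M0 \<ge> 0" and K0: "K0 \<ge> 0"
    and M: "\<And>y. y \<in> {-pi..pi} \<Longrightarrow> cmod (h y) \<le> M0"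
    and K: "\<And>x y. x \<in> {-pi..pi} \<Longrightarrow> y \<in> {-pi..pi} \<Longrightarrow> cmod (h x - h y) \<le> K0 * \<bar>x - y\<bar>"
  defines "D \<equiv> 2*pi*(4*pi*K0 + (4*pi+1)*M0)"
  defines "B0 \<equiv> 2*pi*M0 + 240*D"
  shows "\<And>y. y \<in> {-pi..pi} \<Longrightarrow> cmod (integral {-pi..y} (Fk h \<sigma> k)) \<le> B0 * (4/5)^k"
proof (induction k)
  case 0
  have "cmod (integral {-pi..y} (Fk h \<sigma> 0)) \<le> M0 * (y - (-pi))"
    by (rule int_norm_le) (use 0 in \<open>auto intro!: integrable_continuous_interval continuous_on_subset[OF cont_Fk[OF ch]] Fk_props(1)[OF sg M K]\<close>)
  also have "\<dots> \<le> M0 * (2*pi)" using 0 M0 by (intro mult_left_mono) auto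
  also have "\<dots> \<le> B0 * (4/5)^0" unfolding B0_def D_def using M0 K0 by simp
  finally show ?case .
next
  case (Suc k)
  define N where "N = NN (Suc k)"
  define K where "K = K0 + M0 * real (SS (Suc k))"
  have N0: "N > 0" "even N" unfolding N_def by (simp_all add: NN_pos NN_even)
  have eq: "integral {-pi..y} (Fk h \<sigma> (Suc k)) = integral {-pi..y} (\<lambda>s. Fk h \<sigma> k s * cis (\<sigma> * 1 * sin (real N * s)))"
    unfolding N_def Fk_Suc ..
  have "cmod (integral {-pi..y} (Fk h \<sigma> (Suc k))) \<le> (1 - (11/48) * 1^2) * (B0 * (4/5)^k) + (4*pi*K + M0) * (2*pi/real N)"
    unfolding eq
    by (rule averaging[OF N0 _ _ sg cont_Fk[OF ch] Fk_props(1)[OF sg M K] Fk_props(2)[OF sg M K] Suc.IH Suc.prems,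
          unfolded K_def[symmetric]]) auto
  also have "(4*pi*K + M0) * (2*pi/real N) \<le> D / 2^(Suc k)"
  proof -
    have S1: "real (SS (Suc k)) \<ge> 1" using SS_pos[of "Suc k"] by (simp del: SS.simps)
    have "4*pi*K + M0 \<le> (4*pi*K0 + (4*pi+1)*M0) * real (SS (Suc k))"
    proof -
      define S where "S = real (SS (Suc k))"
      have a: "4*pi*K0 * 1 \<le> 4*pi*K0 * S" unfolding S_def using S1 K0 by (intro mult_left_mono) auto
      have b: "M0 * 1 \<le> M0 * S" unfolding S_def using S1 M0 by (intro mult_left_mono) auto
      have e1: "4*pi*K + M0 = 4*pi*K0 + 4*pi*(M0*S) + M0" unfolding K_def S_def by (simp add: algebra_simps)
      have e2: "(4*pi*K0 + (4*pi+1)*M0) * S = 4*pi*K0 * S + 4*pi*(M0*S) + M0 * S" by (simp add: algebra_simps)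
      show ?thesis unfolding S_def[symmetric] e1 e2 using a b by linarith
    qed
    then have "(4*pi*K + M0) * (2*pi/real N) \<le> (4*pi*K0 + (4*pi+1)*M0) * real (SS (Suc k)) * (2*pi/real N)"
      using N0 by (intro mult_right_mono) auto
    also have "\<dots> = D / 2^(Suc k)"
    proof -
      have NNr: "real N = real (SS (Suc k)) * 2^(Suc k)" unfolding N_def NN_def by (simp del: SS.simps)
      show ?thesis unfolding D_def NNr using S1 by (simp del: SS.simps add: field_simps)
    qed
    finally show ?thesis .
  qed
  also have "(1 - (11/48) * 1^2) * (B0 * (4/5)^k) + D / 2^(Suc k) \<le> B0 * (4/5)^Suc k"
  proof -
    have D0: "D \<ge> 0" unfolding D_def using M0 K0 by simp
    have "(1/2::real)^(Suc k) \<le> (4/5)^k"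
    proof -
      have "(1/2::real)^(Suc k) \<le> (1/2)^k" by (simp add: power_le_one)
      also have "\<dots> \<le> (4/5)^k" by (intro power_mono) auto
      finally show ?thesis .
    qed
    then have "D * (1/2)^(Suc k) \<le> D * (4/5)^k" using D0 by (rule mult_left_mono)
    moreover have "D * (1/2::real)^(Suc k) = D / 2^(Suc k)" by (simp only: power_one_over) simp
    ultimately have "D / 2^(Suc k) \<le> D * (4/5)^k" by simp
    also have "\<dots> \<le> B0 / 240 * (4/5)^k" unfolding B0_def using M0 by (intro mult_right_mono) auto
    finally have q: "D / 2^(Suc k) \<le> B0 / 240 * (4/5)^k" .
    define X where "X = B0 * (4/5::real)^k"
    have X0: "X \<ge> 0" unfolding X_def B0_def D_def using M0 K0 by simp
    have e1: "(1 - (11/48) * 1^2) * (B0 * (4/5)^k) = 37/48 * X" unfolding X_def by simp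
    have e2: "B0 * (4/5::real)^Suc k = 4/5 * X" unfolding X_def by simp
    have e3: "B0 / 240 * (4/5::real)^k = X / 240" unfolding X_def by simp
    show ?thesis unfolding e1 e2 using q e3 X0 by linarith
  qed
  finally show ?case by simp
qed

lemma err_bound:
  assumes M0: "M0 \<ge> 0" and K0: "K0 \<ge> 0"
  shows "(4*pi*(K0 + M0 * real (SS (Suc k))) + M0) * (2*pi/real (NN (Suc k))) \<le> 2*pi*(4*pi*K0 + (4*pi+1)*M0) / 2^(Suc k)"
proof -
  define S where "S = real (SS (Suc k))"
  have S1: "S \<ge> 1" unfolding S_def using SS_pos[of "Suc k"] by (simp del: SS.simps)
  have a: "4*pi*K0 * 1 \<le> 4*pi*K0 * S" using S1 K0 by (intro mult_left_mono) auto
  have b: "M0 * 1 \<le> M0 * S" using S1 M0 by (intro mult_left_mono) auto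
  have e1: "4*pi*(K0 + M0 * S) + M0 = 4*pi*K0 + 4*pi*(M0*S) + M0" by (simp add: algebra_simps)
  have e2: "(4*pi*K0 + (4*pi+1)*M0) * S = 4*pi*K0 * S + 4*pi*(M0*S) + M0 * S" by (simp add: algebra_simps)
  have "4*pi*(K0 + M0 * S) + M0 \<le> (4*pi*K0 + (4*pi+1)*M0) * S" unfolding e1 e2 using a b by linarith
  then have "(4*pi*(K0 + M0 * S) + M0) * (2*pi/real (NN (Suc k))) \<le> (4*pi*K0 + (4*pi+1)*M0) * S * (2*pi/real (NN (Suc k)))"
    by (intro mult_right_mono) auto
  also have "\<dots> = 2*pi*(4*pi*K0 + (4*pi+1)*M0) / 2^(Suc k)"
  proof -
    have NNr: "real (NN (Suc k)) = S * 2^(Suc k)" unfolding S_def NN_def by (simp del: SS.simps)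
    show ?thesis unfolding NNr using S1 by (simp del: SS.simps add: field_simps)
  qed
  finally show ?thesis unfolding S_def .
qed

lemma decay_t:
  assumes sg: "\<sigma> = 1 \<or> \<sigma> = -1" and ch: "continuous_on {-pi..pi} h"
    and M0: "M0 \<ge> 0" and K0: "K0 \<ge> 0"
    and M: "\<And>y. y \<in> {-pi..pi} \<Longrightarrow> cmod (h y) \<le> M0"
    and K: "\<And>x y. x \<in> {-pi..pi} \<Longrightarrow> y \<in> {-pi..pi} \<Longrightarrow> cmod (h x - h y) \<le> K0 * \<bar>x - y\<bar>"
    and t: "t \<ge> 0" and y: "y \<in> {-pi..pi}"
  shows "cmod (integral {-pi..y} (\<lambda>s. h s * cis (\<sigma> * Phi t s)))
     \<le> 5/2 * (2*pi*M0 + 240*(2*pi*(4*pi*K0 + (4*pi+1)*M0))) * exp (- ln (5/4) * t)"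
proof -
  define D where "D = 2*pi*(4*pi*K0 + (4*pi+1)*M0)"
  define B0 where "B0 = 2*pi*M0 + 240*D"
  define m where "m = nat \<lfloor>t\<rfloor>"
  define \<theta> where "\<theta> = t - real m"
  have rm: "real m = of_int \<lfloor>t\<rfloor>" unfolding m_def using t by simp
  have th: "0 \<le> \<theta>" "\<theta> \<le> 1" unfolding \<theta>_def rm by linarith+
  have D0: "0 \<le> D" unfolding D_def using M0 K0 by simp
  have B00: "0 \<le> B0" "D \<le> B0" unfolding B0_def using D0 M0 by auto
  have eq: "h s * cis (\<sigma> * Phi t s) = Fk h \<sigma> m s * cis (\<sigma> * \<theta> * sin (real (NN (Suc m)) * s))" for s
    unfolding Fk_def Phi_def m_def[symmetric] \<theta>_def by (simp add: cis_mult algebra_simps)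
  have "cmod (integral {-pi..y} (\<lambda>s. h s * cis (\<sigma> * Phi t s)))
      \<le> (1 - (11/48) * \<theta>^2) * (B0 * (4/5)^m) + (4*pi*(K0 + M0 * real (SS (Suc m))) + M0) * (2*pi/real (NN (Suc m)))"
    unfolding eq
    by (rule averaging[OF NN_pos NN_even th sg cont_Fk[OF ch] Fk_props(1)[OF sg M K] Fk_props(2)[OF sg M K]
          Fk_decay[OF sg ch M0 K0 M K, unfolded D_def[symmetric] B0_def[symmetric]] y])
  also have "\<dots> \<le> B0 * (4/5)^m + D * (4/5)^m"
  proof (rule add_mono)
    have t2: "\<theta>^2 \<le> 1" using th by (simp add: power_le_one)
    have "0 \<le> B0 * (4/5::real)^m" using B00 by simp
    moreover have "0 \<le> 1 - (11/48) * \<theta>^2" "1 - (11/48) * \<theta>^2 \<le> 1" using t2 by auto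
    ultimately show "(1 - (11/48) * \<theta>^2) * (B0 * (4/5)^m) \<le> B0 * (4/5)^m"
      by (rule mult_left_le_one_le)
    have "(4*pi*(K0 + M0 * real (SS (Suc m))) + M0) * (2*pi/real (NN (Suc m))) \<le> D / 2^(Suc m)"
      unfolding D_def by (rule err_bound[OF M0 K0])
    also have "\<dots> \<le> D * (4/5)^m"
    proof -
      have "(1/2::real)^(Suc m) \<le> (1/2)^m" by (simp add: power_le_one)
      also have "\<dots> \<le> (4/5)^m" by (intro power_mono) auto
      finally have "D * (1/2)^(Suc m) \<le> D * (4/5)^m" using D0 by (rule mult_left_mono)
      moreover have "D * (1/2::real)^(Suc m) = D / 2^(Suc m)" by (simp only: power_one_over) simp
      ultimately show ?thesis by simp
    qed
    finally show "(4*pi*(K0 + M0 * real (SS (Suc m))) + M0) * (2*pi/real (NN (Suc m))) \<le> D * (4/5)^m" .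
  qed
  also have "\<dots> \<le> 2 * B0 * (4/5)^m" using B00 by (simp add: algebra_simps mult_right_mono)
  also have "(4/5::real)^m \<le> 5/4 * exp (- ln (5/4) * t)"
  proof -
    have "(4/5::real)^m = exp (- ln (5/4) * real m)"
    proof -
      have "exp (- ln (5/4) * real m) = exp (- ln (5/4::real)) ^ m" by (metis exp_of_nat_mult mult.commute mult_minus_left)
      also have "exp (- ln (5/4::real)) = 4/5" by (simp add: exp_minus)
      finally show ?thesis by simp
    qed
    also have "\<dots> \<le> exp (ln (5/4) - ln (5/4) * t)"
    proof -
      have "t - 1 \<le> real m" unfolding rm by linarith
      moreover have "ln (5/4::real) \<ge> 0" by simp
      ultimately have "ln (5/4) * (t - 1) \<le> ln (5/4) * real m" by (intro mult_left_mono)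
      then have "- ln (5/4) * real m \<le> ln (5/4) - ln (5/4) * t" by (simp add: algebra_simps)
      then show ?thesis by simp
    qed
    also have "\<dots> = 5/4 * exp (- ln (5/4) * t)" by (simp add: exp_diff exp_minus field_simps)
    finally show ?thesis .
  qed
  then have "2 * B0 * (4/5)^m \<le> 2 * B0 * (5/4 * exp (- ln (5/4) * t))" using B00 by (intro mult_left_mono) auto
  finally show ?thesis unfolding B0_def D_def by (simp add: algebra_simps)
qed

theorem theorem3p1:
  fixes f0 g0 :: "real \<Rightarrow> real"
  assumes "smooth_fun f0" and "smooth_fun g0"
    and "periodic_2pi f0" and "periodic_2pi g0"
  shows "\<exists>C0 C1 C2 \<beta>1 \<beta>2 \<beta>3 :: real. C0 > 0 \<and> C1 > 0 \<and> C2 > 0 \<and>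
           \<beta>1 > 0 \<and> \<beta>2 > 0 \<and> \<beta>3 > 0 \<and>
         (\<exists>U :: real \<Rightarrow> real \<Rightarrow> real.
            (\<lambda>p. U (fst p) (snd p)) \<in> borel_measurable borel \<and>
            (\<forall>t. smooth_fun (U t) \<and> periodic_2pi (U t)) \<and>
            (\<forall>t y. \<bar>U t y\<bar> \<le> 1) \<and>
            (\<forall>t\<ge>0. H1_circle_sq (U t) \<le> ennreal ((C0 * exp (\<beta>1 * (of_int \<lceil>t\<rceil>)\<^sup>2))\<^sup>2)) \<and>
            (let \<rho> = transport_sol U (\<lambda>x y. f0 y * sin x + g0 y * cos x) in
              \<forall>t\<ge>0.
                (\<forall>x y. (\<lambda>y'. \<rho> t x y') differentiable (at y)) \<and>
                Hm1_torus_sq (\<rho> t) \<le> ennreal ((C1 * exp (- \<beta>2 * t))\<^sup>2) \<and>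
                H1_torus_sq (\<rho> t) \<le> ennreal ((C2 * exp (\<beta>3 * (of_int \<lceil>t\<rceil>)\<^sup>2))\<^sup>2)))"
proof -
  note sf = assms(1) and sg = assms(2)
  have df: "\<And>x. DERIV f0 x :> deriv f0 x" by (rule smooth_facts(1)[OF sf])
  have dg: "\<And>x. DERIV g0 x :> deriv g0 x" by (rule smooth_facts(1)[OF sg])
  have cf: "continuous_on S f0" for S by (rule smooth_facts(2)[OF sf])
  have cg: "continuous_on S g0" for S by (rule smooth_facts(2)[OF sg])
  have cdf: "continuous_on S (deriv f0)" for S by (rule smooth_facts(3)[OF sf])
  have cdg: "continuous_on S (deriv g0)" for S by (rule smooth_facts(3)[OF sg])
  obtain B1 where B1: "B1 \<ge> 0" "\<And>x. x \<in> {-pi..pi} \<Longrightarrow> \<bar>f0 x\<bar> \<le> B1" using cont_bound[OF cf] by blast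
  obtain B2 where B2: "B2 \<ge> 0" "\<And>x. x \<in> {-pi..pi} \<Longrightarrow> \<bar>g0 x\<bar> \<le> B2" using cont_bound[OF cg] by blast
  obtain B3 where B3: "B3 \<ge> 0" "\<And>x. x \<in> {-pi..pi} \<Longrightarrow> \<bar>deriv f0 x\<bar> \<le> B3" using cont_bound[OF cdf] by blast
  obtain B4 where B4: "B4 \<ge> 0" "\<And>x. x \<in> {-pi..pi} \<Longrightarrow> \<bar>deriv g0 x\<bar> \<le> B4" using cont_bound[OF cdg] by blast
  define M where "M = B1 + B2 + B3 + B4 + 1"
  have M1: "M \<ge> 1" unfolding M_def using B1 B2 B3 B4 by simp
  have Mb: "\<bar>f0 y\<bar> \<le> M \<and> \<bar>g0 y\<bar> \<le> M \<and> \<bar>deriv f0 y\<bar> \<le> M \<and> \<bar>deriv g0 y\<bar> \<le> M" if "y \<in> {-pi..pi}" for y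
    using B1(2)[OF that] B2(2)[OF that] B3(2)[OF that] B4(2)[OF that] B1(1) B2(1) B3(1) B4(1)
    unfolding M_def by auto
  have Lf: "\<bar>f0 x - f0 y\<bar> \<le> M * \<bar>x - y\<bar>" if "x \<in> {-pi..pi}" "y \<in> {-pi..pi}" for x y
    by (rule lip_real[OF df _ that]) (use Mb in blast)
  have Lg: "\<bar>g0 x - g0 y\<bar> \<le> M * \<bar>x - y\<bar>" if "x \<in> {-pi..pi}" "y \<in> {-pi..pi}" for x y
    by (rule lip_real[OF dg _ that]) (use Mb in blast)
  define h1 where "h1 y = Complex (g0 y) (- f0 y)" for y
  define h2 where "h2 y = Complex (g0 y) (f0 y)" for y
  have ch1: "continuous_on {-pi..pi} h1" unfolding h1_def[abs_def] Complex_eq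
    by (intro continuous_intros cf cg)
  have ch2: "continuous_on {-pi..pi} h2" unfolding h2_def[abs_def] Complex_eq
    by (intro continuous_intros cf cg)
  have Mh1: "cmod (h1 y) \<le> 2*M" if "y \<in> {-pi..pi}" for y
    using cmod_le[of "h1 y"] Mb[OF that] unfolding h1_def by simp
  have Mh2: "cmod (h2 y) \<le> 2*M" if "y \<in> {-pi..pi}" for y
    using cmod_le[of "h2 y"] Mb[OF that] unfolding h2_def by simp
  have Kh1: "cmod (h1 x - h1 y) \<le> 2*M * \<bar>x - y\<bar>" if "x \<in> {-pi..pi}" "y \<in> {-pi..pi}" for x y
    using cmod_le[of "h1 x - h1 y"] Lf[OF that] Lg[OF that] unfolding h1_def by (simp add: abs_minus_commute)
  have Kh2: "cmod (h2 x - h2 y) \<le> 2*M * \<bar>x - y\<bar>" if "x \<in> {-pi..pi}" "y \<in> {-pi..pi}" for x y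
    using cmod_le[of "h2 x - h2 y"] Lf[OF that] Lg[OF that] unfolding h2_def by simp
  define B0 where "B0 = 2*pi*(2*M) + 240*(2*pi*(4*pi*(2*M) + (4*pi+1)*(2*M)))"
  define \<beta> where "\<beta> = ln (5/4::real)"
  define W where "W t = 5/2 * B0 * exp (- \<beta> * t)" for t
  have B0pos: "B0 > 0" unfolding B0_def using M1 by (simp add: add_pos_nonneg)
  have H1eq: "H1 f0 g0 t = (\<lambda>s. h1 s * cis ((-1) * Phi t s))" for t
    unfolding H1_def[abs_def] h1_def by simp
  have H2eq: "H2 f0 g0 t = (\<lambda>s. h2 s * cis (1 * Phi t s))" for t
    unfolding H2_def[abs_def] h2_def by simp
  have W1: "cmod (integral {-pi..y} (H1 f0 g0 t)) \<le> W t" if "t \<ge> 0" "y \<in> {-pi..pi}" for t y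
    unfolding H1eq W_def B0_def \<beta>_def
    by (rule decay_t[OF _ ch1 _ _ Mh1 Kh1 that]) (use M1 in auto)
  have W2: "cmod (integral {-pi..y} (H2 f0 g0 t)) \<le> W t" if "t \<ge> 0" "y \<in> {-pi..pi}" for t y
    unfolding H2eq W_def B0_def \<beta>_def
    by (rule decay_t[OF _ ch2 _ _ Mh2 Kh2 that]) (use M1 in auto)
  define C0 where "C0 = sqrt (2*pi*(1 + exp 1^2))"
  define C1 where "C1 = sqrt (2 * (10 + 8*pi\<^sup>2) / (16*pi\<^sup>2)) * (5/2 * B0)"
  define C2 where "C2 = sqrt (48*pi^2*M^2*(1 + exp 7)^2 + 1)"
  define \<beta>1 :: real where "\<beta>1 = 3"
  define \<beta>2 where "\<beta>2 = \<beta>"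
  define \<beta>3 :: real where "\<beta>3 = 6"
  have body: "C0 > 0 \<and> C1 > 0 \<and> C2 > 0 \<and>
           \<beta>1 > 0 \<and> \<beta>2 > 0 \<and> \<beta>3 > 0 \<and>
         (\<exists>U :: real \<Rightarrow> real \<Rightarrow> real.
            (\<lambda>p. U (fst p) (snd p)) \<in> borel_measurable borel \<and>
            (\<forall>t. smooth_fun (U t) \<and> periodic_2pi (U t)) \<and>
            (\<forall>t y. \<bar>U t y\<bar> \<le> 1) \<and>
            (\<forall>t\<ge>0. H1_circle_sq (U t) \<le> ennreal ((C0 * exp (\<beta>1 * (of_int \<lceil>t\<rceil>)\<^sup>2))\<^sup>2)) \<and>
            (let \<rho> = transport_sol U (\<lambda>x y. f0 y * sin x + g0 y * cos x) in
              \<forall>t\<ge>0.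
                (\<forall>x y. (\<lambda>y'. \<rho> t x y') differentiable (at y)) \<and>
                Hm1_torus_sq (\<rho> t) \<le> ennreal ((C1 * exp (- \<beta>2 * t))\<^sup>2) \<and>
                H1_torus_sq (\<rho> t) \<le> ennreal ((C2 * exp (\<beta>3 * (of_int \<lceil>t\<rceil>)\<^sup>2))\<^sup>2)))"
  proof (intro conjI)
    show "C0 > 0" unfolding C0_def by (simp add: add_pos_nonneg)
    show "C1 > 0"
    proof -
      have "0 < 2 * (10 + 8*pi\<^sup>2) / (16*pi\<^sup>2)" by (intro divide_pos_pos) (auto simp: add_pos_nonneg)
      then have "0 < sqrt (2 * (10 + 8*pi\<^sup>2) / (16*pi\<^sup>2))" by (rule real_sqrt_gt_zero)
      then show ?thesis unfolding C1_def using B0pos by (intro mult_pos_pos) auto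
    qed
    show "C2 > 0" unfolding C2_def by (simp add: add_nonneg_pos)
    show "\<beta>1 > 0" "\<beta>3 > 0" unfolding \<beta>1_def \<beta>3_def by simp_all
    show "\<beta>2 > 0" unfolding \<beta>2_def \<beta>_def by simp
    show "\<exists>U :: real \<Rightarrow> real \<Rightarrow> real.
            (\<lambda>p. U (fst p) (snd p)) \<in> borel_measurable borel \<and>
            (\<forall>t. smooth_fun (U t) \<and> periodic_2pi (U t)) \<and>
            (\<forall>t y. \<bar>U t y\<bar> \<le> 1) \<and>
            (\<forall>t\<ge>0. H1_circle_sq (U t) \<le> ennreal ((C0 * exp (\<beta>1 * (of_int \<lceil>t\<rceil>)\<^sup>2))\<^sup>2)) \<and>
            (let \<rho> = transport_sol U (\<lambda>x y. f0 y * sin x + g0 y * cos x) in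
              \<forall>t\<ge>0.
                (\<forall>x y. (\<lambda>y'. \<rho> t x y') differentiable (at y)) \<and>
                Hm1_torus_sq (\<rho> t) \<le> ennreal ((C1 * exp (- \<beta>2 * t))\<^sup>2) \<and>
                H1_torus_sq (\<rho> t) \<le> ennreal ((C2 * exp (\<beta>3 * (of_int \<lceil>t\<rceil>)\<^sup>2))\<^sup>2))"
    proof (rule exI[of _ Uf], intro conjI allI impI)
      show "(\<lambda>p. Uf (fst p) (snd p)) \<in> borel_measurable borel" by (rule Uf_meas)
      fix t show "smooth_fun (Uf t)" "periodic_2pi (Uf t)" by (rule Uf_props(1), rule Uf_props(2))
    next
      fix t y show "\<bar>Uf t y\<bar> \<le> 1" by (rule Uf_props(3))
    next
      fix t :: real assume "0 \<le> t"
      then show "H1_circle_sq (Uf t) \<le> ennreal ((C0 * exp (\<beta>1 * (of_int \<lceil>t\<rceil>)\<^sup>2))\<^sup>2)"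
        unfolding C0_def \<beta>1_def by (rule H1_circle_Uf)
    next
      show "let \<rho> = transport_sol Uf (\<lambda>x y. f0 y * sin x + g0 y * cos x) in
              \<forall>t\<ge>0.
                (\<forall>x y. (\<lambda>y'. \<rho> t x y') differentiable (at y)) \<and>
                Hm1_torus_sq (\<rho> t) \<le> ennreal ((C1 * exp (- \<beta>2 * t))\<^sup>2) \<and>
                H1_torus_sq (\<rho> t) \<le> ennreal ((C2 * exp (\<beta>3 * (of_int \<lceil>t\<rceil>)\<^sup>2))\<^sup>2)"
        unfolding Let_def
      proof (intro allI impI conjI)
        fix t :: real assume t: "0 \<le> t"
        note tr = transport_rho[OF t, of f0 g0]
        show "(\<lambda>y'. transport_sol Uf (\<lambda>x y. f0 y * sin x + g0 y * cos x) t x y') differentiable (at y)" for x y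
          unfolding tr by (rule rho_diff[OF sf sg])
        show "H1_torus_sq (transport_sol Uf (\<lambda>x y. f0 y * sin x + g0 y * cos x) t)
              \<le> ennreal ((C2 * exp (\<beta>3 * (of_int \<lceil>t\<rceil>)\<^sup>2))\<^sup>2)"
          unfolding tr C2_def \<beta>3_def by (rule H1_torus_rho[OF sf sg t Mb])
        have "Hm1_torus_sq (rho f0 g0 t) \<le> ennreal (2 * ((10 + 8*pi\<^sup>2) * (W t)\<^sup>2) / (16*pi\<^sup>2))"
          by (rule Hm1_rho[OF cf cg W1[OF t] W2[OF t]])
        also have "2 * ((10 + 8*pi\<^sup>2) * (W t)\<^sup>2) / (16*pi\<^sup>2) = (C1 * exp (- \<beta>2 * t))\<^sup>2"
        proof -
          define c where "c = 2 * (10 + 8*pi\<^sup>2) / (16*pi\<^sup>2)"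
          have c0: "c \<ge> 0" unfolding c_def by simp
          have "C1 * exp (- \<beta>2 * t) = sqrt c * W t"
            unfolding C1_def c_def[symmetric] W_def \<beta>2_def by (simp add: algebra_simps)
          then have "(C1 * exp (- \<beta>2 * t))\<^sup>2 = (sqrt c)\<^sup>2 * (W t)\<^sup>2" by (simp only: power_mult_distrib)
          also have "\<dots> = c * (W t)\<^sup>2" using c0 by simp
          finally have "(C1 * exp (- \<beta>2 * t))\<^sup>2 = c * (W t)\<^sup>2" .
          moreover have "2 * ((10 + 8*pi\<^sup>2) * (W t)\<^sup>2) / (16*pi\<^sup>2) = c * (W t)\<^sup>2" by (simp only: c_def times_divide_eq_left mult.assoc)
          ultimately show ?thesis by simp
        qed
        finally show "Hm1_torus_sq (transport_sol Uf (\<lambda>x y. f0 y * sin x + g0 y * cos x) t)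
              \<le> ennreal ((C1 * exp (- \<beta>2 * t))\<^sup>2)" unfolding tr .
      qed
    qed
  qed
  show ?thesis
    apply (rule exI[of _ C0], rule exI[of _ C1], rule exI[of _ C2])
    apply (rule exI[of _ \<beta>1], rule exI[of _ \<beta>2], rule exI[of _ \<beta>3])
    by (rule body)
qed

end
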